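(* Let $u=(u(i))_{i\in\mathbb{N}}$, $v=(v(i))_{i\in\mathbb{N}}$ be unitaries in $\ell^\infty(M_m(\mathbb{C}))$. (1) If $\lim_{i\to\infty}\|u(i)-v(i)\|=0$, then $\Phi^u(T)-\Phi^v(T)$ is compact for every $T\in\mathcal{B}(H)$. (2) For every partition $\vec E=\{E_n\}_{n\in\mathbb{N}}\in\mathrm{Part}_\mathbb{N}$, $\Phi^u(a)-\Phi^v(a)$ is compact for all $a\in\mathcal{D}[\vec E]$ if and only if $\limsup_n\Delta_{E_n}(u,v)=0$.
   Context: $H$ is a separable infinite-dimensional complex Hilbert space with fixed orthonormal basis $\{\xi_k\}_{k\in\mathbb{N}}$, $m\ge1$. A unitary $u=(u(i))_i$ of $\ell^\infty(M_m(\mathbb{C}))$ (a bounded sequence of unitary $m\times m$ matrices) acts on $H\otimes\mathbb{C}^m=\bigoplus_i(\xi_i\otimes\mathbb{C}^m)$ by acting as $u(i)$ on $\xi_i\otimes\mathbb{C}^m$; define $\Phi^u:\mathcal{B}(H)\to\mathcal{B}(H\otimes\mathbb{C}^m)$ by $\Phi^u(T)=u(T\otimes1_m)u^*$; compactness refers to $\mathcal{K}(H\otimes\mathbb{C}^m)$. For $I\subseteq\mathbb{N}$, $\Delta_I(u,v)=\sup_{i,j\in I}\|u(i)u(j)^*-v(i)v(j)^*\|$. $\mathrm{Part}_\mathbb{N}$ is the set of partitions $\vec E=\{E_n\}$ of $\mathbb{N}$ into consecutive finite intervals; $\mathcal{D}[\vec E]$ is the algebra of operators on $H$ commuting with every projection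 $P_{E_n}$ onto $\overline{\mathrm{span}}\{\xi_k:k\in E_n\}$. *)

theory Defs
  imports "HOL-Analysis.Analysis"
begin

text \<open>H = ell^2(nat) with basis xi_k = indicator of k; and
  H (x) C^m = ell^2(nat \<times> 'm) where the finite type 'm has CARD('m) = m elements.\<close>

definition l2 :: "('i \<Rightarrow> complex) set" where
  "l2 = {x. (\<lambda>i. (cmod (x i))\<^sup>2) summable_on UNIV}"

definition l2norm :: "('i \<Rightarrow> complex) \<Rightarrow> real" where
  "l2norm x = sqrt (\<Sum>\<^sub>\<infinity>i. (cmod (x i))\<^sup>2)"

text \<open>Bounded (complex-linear) operators on ell^2('i); only their values on l2 matter.\<close>
definition bounded_op :: "(('i \<Rightarrow> complex) \<Rightarrow> ('j \<Rightarrow> complex)) \<Rightarrow> bool" where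
  "bounded_op T \<longleftrightarrow>
     (\<forall>x\<in>l2. T x \<in> l2) \<and>
     (\<forall>x\<in>l2. \<forall>y\<in>l2. T (\<lambda>i. x i + y i) = (\<lambda>i. T x i + T y i)) \<and>
     (\<forall>x\<in>l2. \<forall>c. T (\<lambda>i. c * x i) = (\<lambda>i. c * T x i)) \<and>
     (\<exists>C. \<forall>x\<in>l2. l2norm (T x) \<le> C * l2norm x)"

text \<open>Compact operator: the image of the closed unit ball is totally bounded
  (equivalently relatively compact, ell^2 being complete).\<close>
definition compact_op :: "(('i \<Rightarrow> complex) \<Rightarrow> ('j \<Rightarrow> complex)) \<Rightarrow> bool" where
  "compact_op S \<longleftrightarrow>
     (\<forall>e>0. \<exists>F. finite F \<and> F \<subseteq> l2 \<and>
        (\<forall>x\<in>l2. l2norm x \<le> 1 \<longrightarrow> (\<exists>y\<in>F. l2norm (\<lambda>i. S x i - y i) \<le> e)))"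

definition cadj :: "complex^'m^'m \<Rightarrow> complex^'m^'m" where
  "cadj A = (\<chi> i j. cnj (A $ j $ i))"

definition unitary_mat :: "complex^'m^'m \<Rightarrow> bool" where
  "unitary_mat A \<longleftrightarrow> A ** cadj A = mat 1 \<and> cadj A ** A = mat 1"

definition mnorm :: "complex^'m^'m \<Rightarrow> real" where
  "mnorm A = onorm (\<lambda>x. A *v x)"

definition tens1 :: "((nat \<Rightarrow> complex) \<Rightarrow> (nat \<Rightarrow> complex))
    \<Rightarrow> ((nat \<times> 'm) \<Rightarrow> complex) \<Rightarrow> ((nat \<times> 'm) \<Rightarrow> complex)" where
  "tens1 T y = (\<lambda>(k, j). T (\<lambda>k'. y (k', j)) k)"

text \<open>Action of u = (u(i))_i in ell^infty(M_m(C)): acts as u(i) on xi_i \<otimes> C^m.\<close>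
definition diag_act :: "(nat \<Rightarrow> complex^'m^'m) \<Rightarrow> ((nat \<times> 'm) \<Rightarrow> complex) \<Rightarrow> ((nat \<times> 'm) \<Rightarrow> complex)" where
  "diag_act u y = (\<lambda>(i, j). (u i *v (\<chi> j'. y (i, j'))) $ j)"

definition Phi :: "(nat \<Rightarrow> complex^'m^'m) \<Rightarrow> ((nat \<Rightarrow> complex) \<Rightarrow> (nat \<Rightarrow> complex))
    \<Rightarrow> ((nat \<times> 'm) \<Rightarrow> complex) \<Rightarrow> ((nat \<times> 'm) \<Rightarrow> complex)" where
  "Phi u T = diag_act u \<circ> tens1 T \<circ> diag_act (\<lambda>i. cadj (u i))"

definition Delta :: "nat set \<Rightarrow> (nat \<Rightarrow> complex^'m^'m) \<Rightarrow> (nat \<Rightarrow> complex^'m^'m) \<Rightarrow> real" where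
  "Delta I u v = (SUP p\<in>I \<times> I. mnorm (u (fst p) ** cadj (u (snd p)) - v (fst p) ** cadj (v (snd p))))"

definition Part_N :: "(nat \<Rightarrow> nat set) set" where
  "Part_N = {E. \<exists>a. a 0 = 0 \<and> strict_mono a \<and> (\<forall>n. E n = {a n..<a (Suc n)})}"

definition proj :: "nat set \<Rightarrow> (nat \<Rightarrow> complex) \<Rightarrow> (nat \<Rightarrow> complex)" where
  "proj E x = (\<lambda>k. if k \<in> E then x k else 0)"

definition D_alg :: "(nat \<Rightarrow> nat set) \<Rightarrow> ((nat \<Rightarrow> complex) \<Rightarrow> (nat \<Rightarrow> complex)) set" where
  "D_alg E = {a. bounded_op a \<and> (\<forall>n. \<forall>x\<in>l2. a (proj (E n) x) = proj (E n) (a x))}"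

end

theory Submission
  imports Defs
begin


definition nsq :: "('i \<Rightarrow> complex) \<Rightarrow> real" where
  "nsq x = (\<Sum>\<^sub>\<infinity>i. (cmod (x i))\<^sup>2)"

lemma l2norm_nsq: "l2norm x = sqrt (nsq x)"
  by (simp add: l2norm_def nsq_def)

lemma nsq_nonneg: "nsq x \<ge> 0"
  unfolding nsq_def by (rule infsum_nonneg) auto

lemma l2norm_nonneg: "l2norm x \<ge> 0"
  by (simp add: l2norm_nsq nsq_nonneg)

lemma l2_boundI:
  assumes "\<And>F. finite F \<Longrightarrow> (\<Sum>i\<in>F. (cmod (x i))\<^sup>2) \<le> B"
  shows "x \<in> l2" "nsq x \<le> B"
proof -
  have s: "(\<lambda>i. (cmod (x i))\<^sup>2) summable_on UNIV"
    by (rule nonneg_bdd_above_summable_on) (auto intro!: bdd_aboveI[where M=B] assms)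
  then show "x \<in> l2" by (simp add: l2_def)
  show "nsq x \<le> B" unfolding nsq_def
    by (rule infsum_le_finite_sums[OF s]) (use assms in auto)
qed

lemma sum_le_nsq:
  assumes "x \<in> l2" "finite F"
  shows "(\<Sum>i\<in>F. (cmod (x i))\<^sup>2) \<le> nsq x"
  unfolding nsq_def
  by (rule finite_sum_le_infsum) (use assms in \<open>auto simp: l2_def\<close>)

lemma l2_normI:
  assumes "\<And>F. finite F \<Longrightarrow> (\<Sum>i\<in>F. (cmod (x i))\<^sup>2) \<le> B\<^sup>2" "B \<ge> 0"
  shows "x \<in> l2" "l2norm x \<le> B"
proof -
  show "x \<in> l2" using l2_boundI[of x "B\<^sup>2", OF assms(1)] by auto
  have "nsq x \<le> B\<^sup>2" using l2_boundI[of x "B\<^sup>2", OF assms(1)] by auto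
  then have "sqrt (nsq x) \<le> sqrt (B\<^sup>2)" by (rule real_sqrt_le_mono)
  then show "l2norm x \<le> B" using assms(2) by (simp add: l2norm_nsq)
qed

lemma sum_le_l2norm_sq:
  assumes "x \<in> l2" "finite F"
  shows "(\<Sum>i\<in>F. (cmod (x i))\<^sup>2) \<le> (l2norm x)\<^sup>2"
  using sum_le_nsq[OF assms] by (simp add: l2norm_nsq nsq_nonneg)

lemma coord_le_l2norm:
  assumes "x \<in> l2"
  shows "cmod (x k) \<le> l2norm x"
proof -
  have "(cmod (x k))\<^sup>2 \<le> (l2norm x)\<^sup>2" using sum_le_l2norm_sq[OF assms, of "{k}"] by simp
  then show ?thesis using l2norm_nonneg[of x] by (simp add: abs_le_square_iff)
qed

lemma L2_set_le_l2norm: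
  assumes "x \<in> l2" "finite F"
  shows "L2_set (\<lambda>i. cmod (x i)) F \<le> l2norm x"
  using sum_le_l2norm_sq[OF assms] l2norm_nonneg[of x]
  unfolding L2_set_def by (simp add: real_le_lsqrt)

lemma l2_add:
  assumes "x \<in> l2" "y \<in> l2"
  shows "(\<lambda>i. x i + y i) \<in> l2" "l2norm (\<lambda>i. x i + y i) \<le> l2norm x + l2norm y"
proof -
  have "(\<Sum>i\<in>F. (cmod (x i + y i))\<^sup>2) \<le> (l2norm x + l2norm y)\<^sup>2" if "finite F" for F
  proof -
    have "L2_set (\<lambda>i. cmod (x i + y i)) F \<le> L2_set (\<lambda>i. cmod (x i) + cmod (y i)) F"
      by (rule L2_set_mono) (auto simp: norm_triangle_ineq)
    also have "\<dots> \<le> L2_set (\<lambda>i. cmod (x i)) F + L2_set (\<lambda>i. cmod (y i)) F"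
      by (rule L2_set_triangle_ineq)
    also have "\<dots> \<le> l2norm x + l2norm y"
      using L2_set_le_l2norm[OF assms(1) that] L2_set_le_l2norm[OF assms(2) that] by simp
    finally have "L2_set (\<lambda>i. cmod (x i + y i)) F \<le> l2norm x + l2norm y" .
    then show ?thesis unfolding L2_set_def
      by (metis (no_types, lifting) real_sqrt_le_iff real_sqrt_pow2 real_sqrt_power sum_nonneg zero_le_power2 abs_le_square_iff power2_abs L2_set_def L2_set_nonneg abs_of_nonneg order_trans power_mono)
  qed
  then show "(\<lambda>i. x i + y i) \<in> l2" "l2norm (\<lambda>i. x i + y i) \<le> l2norm x + l2norm y"
    using l2_normI[of "\<lambda>i. x i + y i" "l2norm x + l2norm y"] l2norm_nonneg[of x] l2norm_nonneg[of y]
    by auto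
qed

lemma nsq_scale: "nsq (\<lambda>i. c * x i) = (cmod c)\<^sup>2 * nsq x"
  unfolding nsq_def by (simp add: norm_mult power_mult_distrib infsum_cmult_right')

lemma l2_scale:
  assumes "x \<in> l2"
  shows "(\<lambda>i. c * x i) \<in> l2" "l2norm (\<lambda>i. c * x i) = cmod c * l2norm x"
proof -
  show "l2norm (\<lambda>i. c * x i) = cmod c * l2norm x"
    by (simp add: l2norm_nsq nsq_scale real_sqrt_mult)
  have "(\<lambda>i. (cmod c)\<^sup>2 * (cmod (x i))\<^sup>2) summable_on UNIV"
    using assms by (auto simp: l2_def intro: summable_on_cmult_right)
  then show "(\<lambda>i. c * x i) \<in> l2" by (simp add: l2_def norm_mult power_mult_distrib)
qed

lemma l2_diff:
  assumes "x \<in> l2" "y \<in> l2"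
  shows "(\<lambda>i. x i - y i) \<in> l2" "l2norm (\<lambda>i. x i - y i) \<le> l2norm x + l2norm y"
proof -
  have "(\<lambda>i. (-1) * y i) \<in> l2" "l2norm (\<lambda>i. (-1) * y i) = l2norm y"
    using l2_scale[OF assms(2), of "-1"] by auto
  then show "(\<lambda>i. x i - y i) \<in> l2" "l2norm (\<lambda>i. x i - y i) \<le> l2norm x + l2norm y"
    using l2_add[OF assms(1), of "\<lambda>i. (-1) * y i"] by auto
qed

lemma l2norm_diff_tri:
  assumes "x \<in> l2" "y \<in> l2" "z \<in> l2"
  shows "l2norm (\<lambda>i. x i - z i) \<le> l2norm (\<lambda>i. x i - y i) + l2norm (\<lambda>i. y i - z i)"
  using l2_add[OF l2_diff(1)[OF assms(1,2)] l2_diff(1)[OF assms(2,3)]] by simp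

lemma l2norm_sym: "l2norm (\<lambda>i. x i - y i) = l2norm (\<lambda>i. y i - x i)"
  unfolding l2norm_def by (simp add: norm_minus_commute)

lemma l2_zero: "(\<lambda>_. 0) \<in> l2" "l2norm (\<lambda>_. 0) = 0"
  by (auto simp: l2_def l2norm_def)

lemma l2_finite_support:
  assumes "finite A" "\<And>i. i \<notin> A \<Longrightarrow> x i = 0"
  shows "x \<in> l2" "nsq x = (\<Sum>i\<in>A. (cmod (x i))\<^sup>2)"
proof -
  have "(\<Sum>i\<in>F. (cmod (x i))\<^sup>2) \<le> (\<Sum>i\<in>A. (cmod (x i))\<^sup>2)" if "finite F" for F
  proof -
    have "(\<Sum>i\<in>F. (cmod (x i))\<^sup>2) \<le> (\<Sum>i\<in>F \<union> A. (cmod (x i))\<^sup>2)"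
      by (rule sum_mono2) (use that assms in auto)
    also have "\<dots> = (\<Sum>i\<in>A. (cmod (x i))\<^sup>2)"
      by (rule sum.mono_neutral_right) (use that assms in auto)
    finally show ?thesis .
  qed
  then show "x \<in> l2" using l2_boundI by blast
  have "nsq x = infsum (\<lambda>i. (cmod (x i))\<^sup>2) A" unfolding nsq_def
    by (rule infsum_cong_neutral) (auto simp: assms)
  then show "nsq x = (\<Sum>i\<in>A. (cmod (x i))\<^sup>2)" using assms by simp
qed



lemma floor_approx:
  fixes t h :: real
  assumes "h > 0"
  shows "\<bar>t - h * of_int \<lfloor>t / h\<rfloor>\<bar> \<le> h"
proof -
  define k where "k = (of_int \<lfloor>t / h\<rfloor> :: real)"
  have "k \<le> t / h" "t / h < k + 1" unfolding k_def by simp_all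
  then have "k * h \<le> t" "t < (k + 1) * h"
    using assms by (simp_all add: pos_le_divide_eq pos_divide_less_eq)
  then have "h * k \<le> t" "t < h * k + h"
    by (auto simp: algebra_simps)
  then show ?thesis unfolding k_def[symmetric] by (simp add: abs_le_iff)
qed

lemma floor_bound:
  fixes t h R :: real
  assumes "h > 0" "\<bar>t\<bar> \<le> R"
  shows "\<lfloor>t / h\<rfloor> \<in> {-(\<lceil>R / h\<rceil>)..\<lceil>R / h\<rceil>}"
proof -
  have "t \<le> R" "-R \<le> t" using assms(2) by (simp_all add: abs_le_iff)
  have a: "t / h \<le> R / h" using \<open>t \<le> R\<close> assms(1) by (simp add: divide_right_mono)
  have b: "(-R) / h \<le> t / h" by (rule divide_right_mono[OF \<open>-R \<le> t\<close>]) (use assms(1) in simp)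
  have c: "\<lfloor>t / h\<rfloor> \<le> \<lfloor>R / h\<rfloor>" using a by (rule floor_mono)
  have d: "\<lfloor>R / h\<rfloor> \<le> \<lceil>R / h\<rceil>" by (rule floor_le_ceiling)
  have e: "\<lfloor>(-R) / h\<rfloor> \<le> \<lfloor>t / h\<rfloor>" using b by (rule floor_mono)
  have f: "\<lfloor>(-R) / h\<rfloor> = - \<lceil>R / h\<rceil>" by (simp add: floor_minus)
  have g: "\<lfloor>t / h\<rfloor> \<le> \<lceil>R / h\<rceil>" using c d by (rule order_trans)
  show ?thesis using g e f by simp
qed

lemma grid_net:
  fixes A :: "'i set" and h R :: real
  assumes "finite A" "h > 0"
  shows "\<exists>G. finite G \<and> G \<subseteq> l2 \<and> (\<forall>x. (\<forall>i. i \<notin> A \<longrightarrow> x i = 0) \<and> (\<forall>i. cmod (x i) \<le> R) \<longrightarrow>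
            (\<exists>g\<in>G. (\<forall>i. i \<notin> A \<longrightarrow> g i = 0) \<and> (\<forall>i. cmod (x i - g i) \<le> 2 * h)))"
proof -
  define fl where "fl z = complex_of_real h * (of_int \<lfloor>Re z / h\<rfloor> + \<i> * of_int \<lfloor>Im z / h\<rfloor>)" for z
  define K where "K = \<lceil>R / h\<rceil>"
  define Gr where "Gr = (\<lambda>(a,b). complex_of_real h * (of_int a + \<i> * of_int b)) ` ({-K..K} \<times> {-K..K})"
  define G :: "('i \<Rightarrow> complex) set" where "G = {g. \<forall>i. (i\<in>A \<longrightarrow> g i \<in> Gr) \<and> (i\<notin>A \<longrightarrow> g i = 0)}"
  have "finite Gr" unfolding Gr_def by simp
  have fG: "finite G" unfolding G_def by (rule finite_set_of_finite_funs[OF assms(1) \<open>finite Gr\<close>])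
  have lG: "G \<subseteq> l2"
  proof
    fix g assume "g \<in> G"
    then have "\<And>i. i \<notin> A \<Longrightarrow> g i = 0" unfolding G_def by simp
    then show "g \<in> l2" by (rule l2_finite_support(1)[OF assms(1)])
  qed
  have main: "\<exists>g\<in>G. (\<forall>i. i \<notin> A \<longrightarrow> g i = 0) \<and> (\<forall>i. cmod (x i - g i) \<le> 2 * h)"
    if x1: "\<forall>i. i \<notin> A \<longrightarrow> x i = 0" and x2: "\<forall>i. cmod (x i) \<le> R" for x
  proof -
    define g where "g = (\<lambda>i. if i \<in> A then fl (x i) else 0)"
    have c: "cmod (x i - fl (x i)) \<le> 2 * h" for i
    proof -
      have "cmod (x i - fl (x i)) \<le> \<bar>Re (x i - fl (x i))\<bar> + \<bar>Im (x i - fl (x i))\<bar>" by (rule cmod_le)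
      moreover have "Re (x i - fl (x i)) = Re (x i) - h * of_int \<lfloor>Re (x i) / h\<rfloor>"
        "Im (x i - fl (x i)) = Im (x i) - h * of_int \<lfloor>Im (x i) / h\<rfloor>"
        by (simp_all add: fl_def)
      moreover note floor_approx[OF assms(2), of "Re (x i)"] floor_approx[OF assms(2), of "Im (x i)"]
      ultimately show ?thesis
        by (smt (verit))
    qed
    have "fl (x i) \<in> Gr" for i
    proof -
      have "\<bar>Re (x i)\<bar> \<le> R" "\<bar>Im (x i)\<bar> \<le> R"
        using x2 abs_Re_le_cmod[of "x i"] abs_Im_le_cmod[of "x i"] by (meson order_trans)+
      then have "\<lfloor>Re (x i) / h\<rfloor> \<in> {-K..K}" "\<lfloor>Im (x i) / h\<rfloor> \<in> {-K..K}"
        unfolding K_def using floor_bound[OF assms(2)] by blast+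
      then have "(\<lfloor>Re (x i) / h\<rfloor>, \<lfloor>Im (x i) / h\<rfloor>) \<in> {-K..K} \<times> {-K..K}" by simp
      then show ?thesis unfolding Gr_def fl_def by (rule rev_image_eqI) simp
    qed
    then have "g \<in> G" unfolding G_def g_def by simp
    moreover have "\<forall>i. i \<notin> A \<longrightarrow> g i = 0" unfolding g_def by simp
    moreover have "\<forall>i. cmod (x i - g i) \<le> 2 * h"
    proof
      fix i show "cmod (x i - g i) \<le> 2 * h"
        using c[of i] x1 assms(2) unfolding g_def by (cases "i \<in> A") auto
    qed
    ultimately show ?thesis by blast
  qed
  show ?thesis
    apply (rule exI[of _ G])
    using fG lG main by blast
qed



lemma compact_op_cong:
  assumes "compact_op S" "\<And>x. x \<in> l2 \<Longrightarrow> S x = S' x"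
  shows "compact_op S'"
  using assms unfolding compact_op_def by metis

lemma l2norm_finite_support_le:
  assumes "finite A" "\<And>i. i \<notin> A \<Longrightarrow> d i = 0" "\<And>i. cmod (d i) \<le> b"
  shows "l2norm d \<le> real (card A) * b"
proof -
  have "l2norm d = L2_set (\<lambda>i. cmod (d i)) A"
    using l2_finite_support(2)[OF assms(1,2)] by (simp add: l2norm_nsq L2_set_def)
  also have "\<dots> \<le> sum (\<lambda>i. cmod (d i)) A" by (rule L2_set_le_sum) simp
  also have "\<dots> \<le> sum (\<lambda>i. b) A" by (rule sum_mono) (use assms(3) in auto)
  finally show ?thesis by simp
qed

lemma compact_tail:
  assumes maps: "\<And>x. x \<in> l2 \<Longrightarrow> S x \<in> l2"
    and bnd: "\<And>x. x \<in> l2 \<Longrightarrow> l2norm x \<le> 1 \<Longrightarrow> l2norm (S x) \<le> R"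
    and tail: "\<And>e. e > 0 \<Longrightarrow> \<exists>A. finite A \<and> (\<forall>x\<in>l2. l2norm x \<le> 1 \<longrightarrow> l2norm (\<lambda>i. if i \<in> A then 0 else S x i) \<le> e)"
  shows "compact_op S"
  unfolding compact_op_def
proof (intro allI impI)
  fix e :: real assume e: "e > 0"
  then obtain A where fA: "finite A" and tA: "\<forall>x\<in>l2. l2norm x \<le> 1 \<longrightarrow> l2norm (\<lambda>i. if i \<in> A then 0 else S x i) \<le> e / 2"
    using tail[of "e/2"] by auto
  define c where "c = real (card A)"
  define h where "h = e / (4 * (c + 1))"
  have c0: "c \<ge> 0" unfolding c_def by simp
  have h0: "h > 0" unfolding h_def using e c0 by simp
  have ch: "c * (2 * h) \<le> e / 2"
  proof -
    have "c * (2 * h) = (e / 2) * (c / (c + 1))" unfolding h_def using c0 by (simp add: field_simps)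
    also have "\<dots> \<le> (e / 2) * 1" using c0 e by (intro mult_left_mono) (auto simp: field_simps)
    finally show ?thesis by simp
  qed
  obtain G where fG: "finite G" and lG: "G \<subseteq> l2" and G: "\<forall>x. (\<forall>i. i \<notin> A \<longrightarrow> x i = 0) \<and> (\<forall>i. cmod (x i) \<le> R) \<longrightarrow>
            (\<exists>g\<in>G. (\<forall>i. i \<notin> A \<longrightarrow> g i = 0) \<and> (\<forall>i. cmod (x i - g i) \<le> 2 * h))"
    using grid_net[OF fA h0, of R] by blast
  have "\<exists>y\<in>G. l2norm (\<lambda>i. S x i - y i) \<le> e" if x: "x \<in> l2" "l2norm x \<le> 1" for x
  proof -
    define z where "z = (\<lambda>i. if i \<in> A then S x i else 0)"
    have Sx: "S x \<in> l2" using maps x by simp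
    have zc: "cmod (z i) \<le> R" for i
      using coord_le_l2norm[OF Sx, of i] bnd[OF x] l2norm_nonneg[of "S x"] unfolding z_def by (cases "i \<in> A") auto
    have zs: "\<forall>i. i \<notin> A \<longrightarrow> z i = 0" unfolding z_def by simp
    obtain g where g: "g \<in> G" "\<forall>i. i \<notin> A \<longrightarrow> g i = 0" "\<forall>i. cmod (z i - g i) \<le> 2 * h"
      using G zc zs by blast
    have zl: "z \<in> l2" using l2_finite_support(1)[OF fA] zs by blast
    have gl: "g \<in> l2" using g(1) lG by blast
    have "l2norm (\<lambda>i. S x i - g i) \<le> l2norm (\<lambda>i. S x i - z i) + l2norm (\<lambda>i. z i - g i)"
      by (rule l2norm_diff_tri[OF Sx zl gl])
    also have "l2norm (\<lambda>i. S x i - z i) = l2norm (\<lambda>i. if i \<in> A then 0 else S x i)"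
      unfolding z_def by (rule arg_cong[where f=l2norm]) auto
    also have "\<dots> \<le> e / 2" using tA x by blast
    also have "l2norm (\<lambda>i. z i - g i) \<le> c * (2 * h)"
      unfolding c_def by (rule l2norm_finite_support_le[OF fA]) (use zs g in auto)
    finally show ?thesis using ch g(1) by (intro bexI[of _ g]) auto
  qed
  then show "\<exists>F. finite F \<and> F \<subseteq> l2 \<and> (\<forall>x\<in>l2. l2norm x \<le> 1 \<longrightarrow> (\<exists>y\<in>F. l2norm (\<lambda>i. S x i - y i) \<le> e))"
    using fG lG by blast
qed

lemma bop_l2: "bounded_op B \<Longrightarrow> x \<in> l2 \<Longrightarrow> B x \<in> l2"
  unfolding bounded_op_def by blast

lemma bop_add: "bounded_op B \<Longrightarrow> x \<in> l2 \<Longrightarrow> y \<in> l2 \<Longrightarrow> B (\<lambda>i. x i + y i) = (\<lambda>i. B x i + B y i)"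
  unfolding bounded_op_def by blast

lemma bop_scale: "bounded_op B \<Longrightarrow> x \<in> l2 \<Longrightarrow> B (\<lambda>i. c * x i) = (\<lambda>i. c * B x i)"
  unfolding bounded_op_def by blast

lemma bop_diff:
  assumes "bounded_op B" "x \<in> l2" "y \<in> l2"
  shows "B (\<lambda>i. x i - y i) = (\<lambda>i. B x i - B y i)"
proof -
  have "(\<lambda>i. (-1) * y i) \<in> l2" using l2_scale(1)[OF assms(3)] .
  then have "B (\<lambda>i. x i + (-1) * y i) = (\<lambda>i. B x i + B (\<lambda>i. (-1) * y i) i)"
    using bop_add[OF assms(1,2)] by blast
  also have "B (\<lambda>i. (-1) * y i) = (\<lambda>i. (-1) * B y i)" by (rule bop_scale[OF assms(1,3)])
  finally show ?thesis by simp
qed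

lemma bop_bound:
  assumes "bounded_op B"
  obtains C where "C > 0" "\<And>x. x \<in> l2 \<Longrightarrow> l2norm (B x) \<le> C * l2norm x"
proof -
  obtain C where C: "\<forall>x\<in>l2. l2norm (B x) \<le> C * l2norm x" using assms unfolding bounded_op_def by blast
  have "l2norm (B x) \<le> (\<bar>C\<bar> + 1) * l2norm x" if "x \<in> l2" for x
  proof -
    have "C * l2norm x \<le> (\<bar>C\<bar> + 1) * l2norm x" by (rule mult_right_mono) (auto simp: l2norm_nonneg)
    then show ?thesis using C that by (meson order_trans)
  qed
  then show ?thesis using that[of "\<bar>C\<bar> + 1"] by simp
qed

lemma compact_comp_left:
  assumes K: "compact_op K" "\<And>x. x \<in> l2 \<Longrightarrow> K x \<in> l2" and B: "bounded_op B"
  shows "compact_op (\<lambda>x. B (K x))"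
  unfolding compact_op_def
proof (intro allI impI)
  fix e :: real assume e: "e > 0"
  obtain C where C0: "C > 0" and C: "\<And>x. x \<in> l2 \<Longrightarrow> l2norm (B x) \<le> C * l2norm x"
    using bop_bound[OF B] by blast
  obtain F where fF: "finite F" and lF: "F \<subseteq> l2" and F: "\<forall>x\<in>l2. l2norm x \<le> 1 \<longrightarrow> (\<exists>y\<in>F. l2norm (\<lambda>i. K x i - y i) \<le> e / C)"
    using K(1)[unfolded compact_op_def, rule_format, of "e / C"] e C0 by auto
  have "\<exists>y\<in>B ` F. l2norm (\<lambda>i. B (K x) i - y i) \<le> e" if x: "x \<in> l2" "l2norm x \<le> 1" for x
  proof -
    obtain y where y: "y \<in> F" "l2norm (\<lambda>i. K x i - y i) \<le> e / C" using F x by blast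
    have yl: "y \<in> l2" using y(1) lF by blast
    have Kx: "K x \<in> l2" using K(2) x by simp
    have "l2norm (\<lambda>i. B (K x) i - B y i) = l2norm (B (\<lambda>i. K x i - y i))"
      using bop_diff[OF B Kx yl] by simp
    also have "\<dots> \<le> C * l2norm (\<lambda>i. K x i - y i)" by (rule C[OF l2_diff(1)[OF Kx yl]])
    also have "\<dots> \<le> C * (e / C)" by (rule mult_left_mono[OF y(2)]) (use C0 in simp)
    also have "\<dots> = e" using C0 by simp
    finally show ?thesis using y(1) by blast
  qed
  moreover have "B ` F \<subseteq> l2" using lF bop_l2[OF B] by blast
  ultimately show "\<exists>F. finite F \<and> F \<subseteq> l2 \<and> (\<forall>x\<in>l2. l2norm x \<le> 1 \<longrightarrow> (\<exists>y\<in>F. l2norm (\<lambda>i. B (K x) i - y i) \<le> e))"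
    using fF by blast
qed

lemma compact_add:
  assumes K1: "compact_op K1" "\<And>x. x \<in> l2 \<Longrightarrow> K1 x \<in> l2"
    and K2: "compact_op K2" "\<And>x. x \<in> l2 \<Longrightarrow> K2 x \<in> l2"
  shows "compact_op (\<lambda>x i. K1 x i + K2 x i)"
  unfolding compact_op_def
proof (intro allI impI)
  fix e :: real assume e: "e > 0"
  obtain F1 where f1: "finite F1" "F1 \<subseteq> l2" and F1: "\<forall>x\<in>l2. l2norm x \<le> 1 \<longrightarrow> (\<exists>y\<in>F1. l2norm (\<lambda>i. K1 x i - y i) \<le> e / 2)"
    using K1(1)[unfolded compact_op_def, rule_format, of "e / 2"] e by auto
  obtain F2 where f2: "finite F2" "F2 \<subseteq> l2" and F2: "\<forall>x\<in>l2. l2norm x \<le> 1 \<longrightarrow> (\<exists>y\<in>F2. l2norm (\<lambda>i. K2 x i - y i) \<le> e / 2)"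
    using K2(1)[unfolded compact_op_def, rule_format, of "e / 2"] e by auto
  define F where "F = (\<lambda>(a, b). (\<lambda>i. a i + b i)) ` (F1 \<times> F2)"
  have "finite F" unfolding F_def using f1 f2 by simp
  moreover have "F \<subseteq> l2" unfolding F_def using f1 f2 l2_add(1) by auto
  moreover have "\<exists>y\<in>F. l2norm (\<lambda>i. (K1 x i + K2 x i) - y i) \<le> e" if x: "x \<in> l2" "l2norm x \<le> 1" for x
  proof -
    obtain a where a: "a \<in> F1" "l2norm (\<lambda>i. K1 x i - a i) \<le> e / 2" using F1 x by blast
    obtain b where b: "b \<in> F2" "l2norm (\<lambda>i. K2 x i - b i) \<le> e / 2" using F2 x by blast
    have al: "a \<in> l2" "b \<in> l2" using a b f1 f2 by blast+
    have "(\<lambda>i. (K1 x i + K2 x i) - (a i + b i)) = (\<lambda>i. (K1 x i - a i) + (K2 x i - b i))" by (auto simp: algebra_simps)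
    then have "l2norm (\<lambda>i. (K1 x i + K2 x i) - (a i + b i)) \<le> l2norm (\<lambda>i. K1 x i - a i) + l2norm (\<lambda>i. K2 x i - b i)"
      using l2_add(2)[OF l2_diff(1)[OF K1(2)[OF x(1)] al(1)] l2_diff(1)[OF K2(2)[OF x(1)] al(2)]] by simp
    also have "\<dots> \<le> e" using a b by simp
    finally show ?thesis unfolding F_def using a(1) b(1) by force
  qed
  ultimately show "\<exists>F. finite F \<and> F \<subseteq> l2 \<and> (\<forall>x\<in>l2. l2norm x \<le> 1 \<longrightarrow> (\<exists>y\<in>F. l2norm (\<lambda>i. K1 x i + K2 x i - y i) \<le> e))"
    by blast
qed



definition ent :: "complex^'m^'m \<Rightarrow> real" where
  "ent A = (\<Sum>j\<in>UNIV. \<Sum>k\<in>UNIV. cmod (A $ j $ k))"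

lemma ent_nonneg: "ent A \<ge> 0"
  unfolding ent_def by (intro sum_nonneg) auto

lemma mv_nth: "(A *v x) $ j = (\<Sum>k\<in>UNIV. A $ j $ k * x $ k)"
  by (simp add: matrix_vector_mult_def)

lemma vnth_le: "norm (x $ i) \<le> norm (x::complex^'m)"
  unfolding norm_vec_def by (rule member_le_L2_set) simp_all

lemma vnorm_l1: "norm (x::complex^'m) \<le> (\<Sum>j\<in>UNIV. norm (x $ j))"
  unfolding norm_vec_def by (rule L2_set_le_sum) simp

lemma norm_mv_ent: "norm (A *v x) \<le> ent A * norm (x::complex^'m)"
proof -
  have "norm (A *v x) \<le> (\<Sum>j\<in>UNIV. norm ((A *v x) $ j))" by (rule vnorm_l1)
  also have "\<dots> \<le> (\<Sum>j\<in>UNIV. \<Sum>k\<in>UNIV. cmod (A $ j $ k) * norm x)"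
  proof (rule sum_mono)
    fix j
    have "norm ((A *v x) $ j) \<le> (\<Sum>k\<in>UNIV. cmod (A $ j $ k * x $ k))"
      unfolding mv_nth by (rule norm_sum)
    also have "\<dots> \<le> (\<Sum>k\<in>UNIV. cmod (A $ j $ k) * norm x)"
      by (rule sum_mono) (simp add: norm_mult mult_left_mono vnth_le)
    finally show "norm ((A *v x) $ j) \<le> (\<Sum>k\<in>UNIV. cmod (A $ j $ k) * norm x)" .
  qed
  also have "\<dots> = ent A * norm x" unfolding ent_def by (simp add: sum_distrib_right)
  finally show ?thesis .
qed

lemma bl_mv: "bounded_linear (\<lambda>x::complex^'m. (A::complex^'m^'m) *v x)"
proof (rule bounded_linear_intro[where K="ent A"])
  show "A *v (x + y) = A *v x + A *v y" for x y by (simp add: matrix_vector_right_distrib)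
  show "A *v (r *\<^sub>R x) = r *\<^sub>R (A *v x)" for r x
    using matrix_vector_mul_linear[of A] by (simp add: linear_iff)
  show "norm (A *v x) \<le> norm x * ent A" for x using norm_mv_ent[of A x] by (simp add: mult.commute)
qed

lemma mnorm_nonneg: "mnorm A \<ge> 0"
  unfolding mnorm_def by (rule onorm_pos_le[OF bl_mv])

lemma norm_mv_mnorm: "norm (A *v x) \<le> mnorm A * norm x"
  unfolding mnorm_def by (rule onorm[OF bl_mv])

lemma norm_axis_c: "norm (axis k (1::complex) :: complex^'m) = 1"
proof -
  have "(\<Sum>i\<in>(UNIV::'m set). (norm (axis k (1::complex) $ i))\<^sup>2) = (\<Sum>i\<in>(UNIV::'m set). if i = k then 1 else 0)"
    by (rule sum.cong) (auto simp: axis_def)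
  then show ?thesis unfolding norm_vec_def L2_set_def by simp
qed

lemma entry_le_mnorm: "cmod (A $ j $ k) \<le> mnorm (A::complex^'m^'m)"
proof -
  have "(A *v axis k 1) $ j = A $ j $ k"
    unfolding mv_nth axis_def by (simp add: if_distrib cong: if_cong)
  then have "cmod (A $ j $ k) \<le> norm (A *v axis k 1)"
    by (metis vnth_le)
  also have "\<dots> \<le> mnorm A * norm (axis k (1::complex))" by (rule norm_mv_mnorm)
  finally show ?thesis by (simp add: norm_axis_c)
qed

lemma ent_le_mnorm: "ent A \<le> real (CARD('m)) * real (CARD('m)) * mnorm (A::complex^'m^'m)"
proof -
  have "ent A \<le> (\<Sum>j\<in>(UNIV::'m set). \<Sum>k\<in>(UNIV::'m set). mnorm A)"
    unfolding ent_def by (intro sum_mono entry_le_mnorm)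
  then show ?thesis by simp
qed

lemma cadj_nth: "cadj A $ i $ j = cnj (A $ j $ i)"
  by (simp add: cadj_def)

lemma cadj_diff: "cadj (A - B) = cadj A - cadj B"
  by (simp add: cadj_def vec_eq_iff)

lemma cadj_cadj: "cadj (cadj A) = A"
  by (simp add: cadj_def vec_eq_iff)

lemma cadj_mult: "cadj (A ** B) = cadj B ** cadj A"
proof -
  have "cnj (\<Sum>k\<in>UNIV. A $ j $ k * B $ k $ i) = (\<Sum>k\<in>UNIV. cnj (B $ k $ i) * cnj (A $ j $ k))" for i j
    by (simp add: mult.commute)
  then show ?thesis by (simp add: cadj_def vec_eq_iff matrix_matrix_mult_def)
qed

lemma ent_cadj: "ent (cadj A) = ent A"
  unfolding ent_def cadj_nth complex_mod_cnj by (rule sum.swap)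

lemma unitary_entry:
  assumes "unitary_mat A"
  shows "cmod (A $ j $ k) \<le> 1"
proof -
  have "(A ** cadj A) $ j $ j = 1" using assms by (simp add: unitary_mat_def mat_def)
  then have "(\<Sum>l\<in>UNIV. A $ j $ l * cnj (A $ j $ l)) = 1"
    by (simp add: matrix_matrix_mult_def cadj_nth)
  moreover have "A $ j $ l * cnj (A $ j $ l) = complex_of_real ((cmod (A $ j $ l))\<^sup>2)" for l
    by (rule complex_norm_square[symmetric])
  ultimately have "(\<Sum>l\<in>UNIV. complex_of_real ((cmod (A $ j $ l))\<^sup>2)) = 1"
    by simp
  then have s: "(\<Sum>l\<in>UNIV. (cmod (A $ j $ l))\<^sup>2) = 1"
    by (metis of_real_eq_1_iff of_real_sum)
  have "(cmod (A $ j $ k))\<^sup>2 \<le> (\<Sum>l\<in>UNIV. (cmod (A $ j $ l))\<^sup>2)"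
    by (rule member_le_sum) auto
  then have "(cmod (A $ j $ k))\<^sup>2 \<le> 1" using s by simp
  then show ?thesis by (simp add: power_le_one_iff abs_le_square_iff)
qed

lemma unitary_ent:
  assumes "unitary_mat A"
  shows "ent (A::complex^'m^'m) \<le> real (CARD('m)) * real (CARD('m))"
proof -
  have "ent A \<le> (\<Sum>j\<in>(UNIV::'m set). \<Sum>k\<in>(UNIV::'m set). 1)"
    unfolding ent_def by (intro sum_mono unitary_entry[OF assms])
  then show ?thesis by simp
qed

lemma unitary_cadj: "unitary_mat A \<Longrightarrow> unitary_mat (cadj A)"
  by (simp add: unitary_mat_def cadj_cadj)

lemma unitary_mult:
  assumes "unitary_mat A" "unitary_mat B"
  shows "unitary_mat (A ** B)"
proof -
  have "(A ** B) ** cadj (A ** B) = A ** (B ** cadj B) ** cadj A"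
    by (simp only: cadj_mult matrix_mul_assoc)
  also have "\<dots> = mat 1" using assms by (simp add: unitary_mat_def)
  finally have 1: "(A ** B) ** cadj (A ** B) = mat 1" .
  have "cadj (A ** B) ** (A ** B) = cadj B ** (cadj A ** A) ** B"
    by (simp only: cadj_mult matrix_mul_assoc)
  also have "\<dots> = mat 1" using assms by (simp add: unitary_mat_def)
  finally show ?thesis using 1 by (simp add: unitary_mat_def)
qed

lemma norm_vec_sq: "(norm (z::complex^'m))\<^sup>2 = (\<Sum>j\<in>UNIV. (cmod (z $ j))\<^sup>2)"
  unfolding norm_vec_def L2_set_def by (simp add: sum_nonneg)



definition vat :: "((nat \<times> 'm) \<Rightarrow> complex) \<Rightarrow> nat \<Rightarrow> complex^'m" where
  "vat y i = (\<chi> j. y (i, j))"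

lemma vat_nth[simp]: "vat y i $ j = y (i, j)"
  by (simp add: vat_def)

lemma diag_act_eq: "diag_act d y (i, j) = (d i *v vat y i) $ j"
  by (simp add: diag_act_def vat_def)

lemma l2norm_sq: "(l2norm x)\<^sup>2 = nsq x"
  by (simp add: l2norm_nsq nsq_nonneg)

lemma sum_prod_UNIV:
  fixes g :: "nat \<times> 'm::finite \<Rightarrow> real"
  assumes "finite F" "\<And>p. g p \<ge> 0"
  shows "(\<Sum>p\<in>F. g p) \<le> (\<Sum>i\<in>fst ` F. \<Sum>j\<in>UNIV. g (i, j))"
proof -
  have "(\<Sum>p\<in>F. g p) \<le> (\<Sum>p\<in>fst ` F \<times> UNIV. g p)"
    by (rule sum_mono2) (use assms in \<open>auto simp: rev_image_eqI\<close>)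
  also have "\<dots> = (\<Sum>i\<in>fst ` F. \<Sum>j\<in>UNIV. g (i, j))"
    by (simp add: sum.cartesian_product)
  finally show ?thesis .
qed

lemma sum_prod_nsq:
  fixes y :: "nat \<times> 'm::finite \<Rightarrow> complex"
  assumes "y \<in> l2" "finite G"
  shows "(\<Sum>i\<in>G. \<Sum>j\<in>UNIV. (cmod (y (i, j)))\<^sup>2) \<le> nsq y"
proof -
  have "(\<Sum>i\<in>G. \<Sum>j\<in>UNIV. (cmod (y (i, j)))\<^sup>2) = (\<Sum>p\<in>G \<times> UNIV. (cmod (y p))\<^sup>2)"
    by (simp add: sum.cartesian_product)
  also have "\<dots> \<le> nsq y" by (rule sum_le_nsq) (use assms in auto)
  finally show ?thesis .
qed

lemma diag_l2:
  fixes d :: "nat \<Rightarrow> complex^'m^'m"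
  assumes M: "\<And>i. ent (d i) \<le> M" and y: "y \<in> l2"
  shows "diag_act d y \<in> l2" "l2norm (diag_act d y) \<le> M * l2norm y"
proof -
  have M0: "M \<ge> 0" using M[of 0] ent_nonneg[of "d 0"] by linarith
  have "(\<Sum>p\<in>F. (cmod (diag_act d y p))\<^sup>2) \<le> (M * l2norm y)\<^sup>2" if F: "finite F" for F
  proof -
    have "(\<Sum>p\<in>F. (cmod (diag_act d y p))\<^sup>2) \<le> (\<Sum>i\<in>fst ` F. \<Sum>j\<in>UNIV. (cmod (diag_act d y (i, j)))\<^sup>2)"
      by (rule sum_prod_UNIV[OF F]) simp
    also have "\<dots> = (\<Sum>i\<in>fst ` F. (norm (d i *v vat y i))\<^sup>2)"
      by (simp add: diag_act_eq norm_vec_sq)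
    also have "\<dots> \<le> (\<Sum>i\<in>fst ` F. M\<^sup>2 * (norm (vat y i))\<^sup>2)"
    proof (rule sum_mono)
      fix i
      have "norm (d i *v vat y i) \<le> M * norm (vat y i)"
        using norm_mv_ent[of "d i" "vat y i"] M[of i] by (meson mult_right_mono norm_ge_zero order_trans)
      then have "(norm (d i *v vat y i))\<^sup>2 \<le> (M * norm (vat y i))\<^sup>2" by (rule power_mono) simp
      then show "(norm (d i *v vat y i))\<^sup>2 \<le> M\<^sup>2 * (norm (vat y i))\<^sup>2" by (simp add: power_mult_distrib)
    qed
    also have "\<dots> = M\<^sup>2 * (\<Sum>i\<in>fst ` F. \<Sum>j\<in>UNIV. (cmod (y (i, j)))\<^sup>2)"
      by (simp add: norm_vec_sq sum_distrib_left)
    also have "\<dots> \<le> M\<^sup>2 * nsq y"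
      by (rule mult_left_mono[OF sum_prod_nsq[OF y]]) (use F in auto)
    also have "\<dots> = (M * l2norm y)\<^sup>2" by (simp add: power_mult_distrib l2norm_sq)
    finally show ?thesis .
  qed
  then show "diag_act d y \<in> l2" "l2norm (diag_act d y) \<le> M * l2norm y"
    using l2_normI[of "diag_act d y" "M * l2norm y"] M0 l2norm_nonneg[of y] by auto
qed

lemma diag_add:
  fixes d :: "nat \<Rightarrow> complex^'m^'m"
  shows "diag_act d (\<lambda>p. x p + y p) = (\<lambda>p. diag_act d x p + diag_act d y p)"
proof
  fix p :: "nat \<times> 'm"
  obtain i j where p: "p = (i, j)" by (cases p)
  show "diag_act d (\<lambda>p. x p + y p) p = diag_act d x p + diag_act d y p"
    unfolding p diag_act_eq mv_nth by (simp add: sum.distrib distrib_left)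
qed

lemma diag_scale:
  fixes d :: "nat \<Rightarrow> complex^'m^'m"
  shows "diag_act d (\<lambda>p. c * x p) = (\<lambda>p. c * diag_act d x p)"
proof
  fix p :: "nat \<times> 'm"
  obtain i j where p: "p = (i, j)" by (cases p)
  have "(\<Sum>k\<in>UNIV. d i $ j $ k * (c * x (i, k))) = c * (\<Sum>k\<in>UNIV. d i $ j $ k * x (i, k))"
    by (simp add: sum_distrib_left algebra_simps)
  then show "diag_act d (\<lambda>p. c * x p) p = c * diag_act d x p"
    unfolding p diag_act_eq mv_nth by simp
qed

lemma diag_bop:
  fixes d :: "nat \<Rightarrow> complex^'m^'m"
  assumes M: "\<And>i. ent (d i) \<le> M"
  shows "bounded_op (diag_act d)"
  unfolding bounded_op_def
proof (intro conjI ballI allI)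
  show "diag_act d x \<in> l2" if "x \<in> l2" for x using diag_l2(1)[of d M, OF M that] .
  show "diag_act d (\<lambda>i. x i + y i) = (\<lambda>i. diag_act d x i + diag_act d y i)" for x y by (rule diag_add)
  show "diag_act d (\<lambda>i. c * x i) = (\<lambda>i. c * diag_act d x i)" for x c by (rule diag_scale)
  show "\<exists>C. \<forall>x\<in>l2. l2norm (diag_act d x) \<le> C * l2norm x" using diag_l2(2)[of d M, OF M] by blast
qed

lemma slice_l2:
  fixes y :: "nat \<times> 'm::finite \<Rightarrow> complex"
  assumes "y \<in> l2"
  shows "(\<lambda>k. y (k, j)) \<in> l2" "nsq (\<lambda>k. y (k, j)) \<le> nsq y"
proof -
  have "(\<Sum>k\<in>G. (cmod (y (k, j)))\<^sup>2) \<le> nsq y" if "finite G" for G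
  proof -
    have "(\<Sum>k\<in>G. (cmod (y (k, j)))\<^sup>2) = (\<Sum>p\<in>(\<lambda>k. (k, j)) ` G. (cmod (y p))\<^sup>2)"
      by (subst sum.reindex) (auto simp: inj_on_def)
    also have "\<dots> \<le> nsq y" by (rule sum_le_nsq) (use assms that in auto)
    finally show ?thesis .
  qed
  then show "(\<lambda>k. y (k, j)) \<in> l2" "nsq (\<lambda>k. y (k, j)) \<le> nsq y"
    using l2_boundI[of "\<lambda>k. y (k, j)" "nsq y"] by auto
qed

lemma tens1_eq: "tens1 T y (k, j) = T (\<lambda>k'. y (k', j)) k"
  by (simp add: tens1_def)

lemma tens1_bop:
  assumes T: "bounded_op T"
  shows "bounded_op (tens1 T :: (nat \<times> 'm::finite \<Rightarrow> complex) \<Rightarrow> _)"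
proof -
  obtain C where C0: "C > 0" and C: "\<And>x. x \<in> l2 \<Longrightarrow> l2norm (T x) \<le> C * l2norm x"
    using bop_bound[OF T] by blast
  define c where "c = real (CARD('m))"
  have bound: "tens1 T y \<in> l2 \<and> l2norm (tens1 T y) \<le> (sqrt c * C) * l2norm y" if y: "y \<in> l2" for y :: "nat \<times> 'm \<Rightarrow> complex"
  proof -
    have sl: "(\<lambda>k. y (k, j)) \<in> l2" for j using slice_l2(1)[OF y] .
    have nT: "nsq (T (\<lambda>k. y (k, j))) \<le> C\<^sup>2 * nsq y" for j
    proof -
      have "l2norm (T (\<lambda>k. y (k, j))) \<le> C * l2norm (\<lambda>k. y (k, j))" by (rule C[OF sl])
      then have "(l2norm (T (\<lambda>k. y (k, j))))\<^sup>2 \<le> (C * l2norm (\<lambda>k. y (k, j)))\<^sup>2"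
        by (rule power_mono) (rule l2norm_nonneg)
      then have "nsq (T (\<lambda>k. y (k, j))) \<le> C\<^sup>2 * nsq (\<lambda>k. y (k, j))"
        by (simp add: l2norm_sq power_mult_distrib)
      also have "\<dots> \<le> C\<^sup>2 * nsq y" by (rule mult_left_mono[OF slice_l2(2)[OF y]]) simp
      finally show ?thesis .
    qed
    have "(\<Sum>p\<in>F. (cmod (tens1 T y p))\<^sup>2) \<le> (sqrt c * C * l2norm y)\<^sup>2" if F: "finite F" for F
    proof -
      have "(\<Sum>p\<in>F. (cmod (tens1 T y p))\<^sup>2) \<le> (\<Sum>i\<in>fst ` F. \<Sum>j\<in>UNIV. (cmod (tens1 T y (i, j)))\<^sup>2)"
        by (rule sum_prod_UNIV[OF F]) simp
      also have "\<dots> = (\<Sum>j\<in>UNIV. \<Sum>i\<in>fst ` F. (cmod (T (\<lambda>k. y (k, j)) i))\<^sup>2)"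
        unfolding tens1_eq by (rule sum.swap)
      also have "\<dots> \<le> (\<Sum>j\<in>(UNIV::'m set). C\<^sup>2 * nsq y)"
      proof (rule sum_mono)
        fix j
        have "(\<Sum>i\<in>fst ` F. (cmod (T (\<lambda>k. y (k, j)) i))\<^sup>2) \<le> nsq (T (\<lambda>k. y (k, j)))"
          by (rule sum_le_nsq[OF bop_l2[OF T sl]]) (use F in simp)
        then show "(\<Sum>i\<in>fst ` F. (cmod (T (\<lambda>k. y (k, j)) i))\<^sup>2) \<le> C\<^sup>2 * nsq y" using nT[of j] by linarith
      qed
      also have "\<dots> = (sqrt c * C * l2norm y)\<^sup>2"
        by (simp add: c_def power_mult_distrib l2norm_sq)
      finally show ?thesis .
    qed
    then show ?thesis
      using l2_normI[of "tens1 T y" "sqrt c * C * l2norm y"] C0 l2norm_nonneg[of y] by (auto simp: c_def)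
  qed
  have add: "tens1 T (\<lambda>p. x p + y p) = (\<lambda>p. tens1 T x p + tens1 T y p)" if "x \<in> l2" "y \<in> l2" for x y :: "nat \<times> 'm \<Rightarrow> complex"
  proof
    fix p :: "nat \<times> 'm"
    obtain k j where p: "p = (k, j)" by (cases p)
    have "T (\<lambda>k'. x (k', j) + y (k', j)) = (\<lambda>i. T (\<lambda>k'. x (k', j)) i + T (\<lambda>k'. y (k', j)) i)"
      by (rule bop_add[OF T slice_l2(1)[OF that(1)] slice_l2(1)[OF that(2)]])
    then show "tens1 T (\<lambda>p. x p + y p) p = tens1 T x p + tens1 T y p"
      unfolding p tens1_eq by simp
  qed
  have scale: "tens1 T (\<lambda>p. c * x p) = (\<lambda>p. c * tens1 T x p)" if "x \<in> l2" for x :: "nat \<times> 'm \<Rightarrow> complex" and c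
  proof
    fix p :: "nat \<times> 'm"
    obtain k j where p: "p = (k, j)" by (cases p)
    have "T (\<lambda>k'. c * x (k', j)) = (\<lambda>i. c * T (\<lambda>k'. x (k', j)) i)"
      by (rule bop_scale[OF T slice_l2(1)[OF that]])
    then show "tens1 T (\<lambda>p. c * x p) p = c * tens1 T x p"
      unfolding p tens1_eq by simp
  qed
  show ?thesis unfolding bounded_op_def
    using bound add scale by blast
qed

lemma bop_comp:
  assumes "bounded_op A" "bounded_op B"
  shows "bounded_op (\<lambda>x. A (B x))"
proof -
  obtain C1 where C1: "C1 > 0" "\<And>x. x \<in> l2 \<Longrightarrow> l2norm (A x) \<le> C1 * l2norm x" using bop_bound[OF assms(1)] by blast
  obtain C2 where C2: "C2 > 0" "\<And>x. x \<in> l2 \<Longrightarrow> l2norm (B x) \<le> C2 * l2norm x" using bop_bound[OF assms(2)] by blast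
  have "l2norm (A (B x)) \<le> (C1 * C2) * l2norm x" if "x \<in> l2" for x
  proof -
    have "l2norm (A (B x)) \<le> C1 * l2norm (B x)" by (rule C1(2)[OF bop_l2[OF assms(2) that]])
    also have "\<dots> \<le> C1 * (C2 * l2norm x)" by (rule mult_left_mono[OF C2(2)[OF that]]) (use C1 in simp)
    finally show ?thesis by (simp add: mult.assoc)
  qed
  moreover have "A (B (\<lambda>i. x i + y i)) = (\<lambda>i. A (B x) i + A (B y) i)" if "x \<in> l2" "y \<in> l2" for x y
    using bop_add[OF assms(2) that] bop_add[OF assms(1) bop_l2[OF assms(2) that(1)] bop_l2[OF assms(2) that(2)]] by simp
  moreover have "A (B (\<lambda>i. c * x i)) = (\<lambda>i. c * A (B x) i)" if "x \<in> l2" for x c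
    using bop_scale[OF assms(2) that] bop_scale[OF assms(1) bop_l2[OF assms(2) that]] by simp
  moreover have "A (B x) \<in> l2" if "x \<in> l2" for x using bop_l2[OF assms(1) bop_l2[OF assms(2) that]] .
  ultimately show ?thesis unfolding bounded_op_def
    by (intro conjI ballI allI exI[of _ "C1 * C2"]) auto
qed

lemma bop_id: "bounded_op (\<lambda>x. x)"
  unfolding bounded_op_def by (auto intro!: exI[of _ 1])



lemma ent_bounded:
  assumes "(\<lambda>i. ent (e i)) \<longlonglongrightarrow> 0"
  obtains M where "M > 0" "\<And>i. ent (e i) \<le> M"
proof -
  have "Bseq (\<lambda>i. ent (e i))" using assms by (intro convergent_imp_Bseq convergentI)
  then obtain K where "K > 0" "\<forall>n. norm (ent (e n)) \<le> K" by (rule BseqE)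
  then have "ent (e i) \<le> K" for i using ent_nonneg[of "e i"] by (metis abs_of_nonneg real_norm_def)
  then show ?thesis using that[of K] \<open>K > 0\<close> by blast
qed

lemma diag_compact:
  fixes e :: "nat \<Rightarrow> complex^'m^'m"
  assumes B: "bounded_op B" and lim: "(\<lambda>i. ent (e i)) \<longlonglongrightarrow> 0"
  shows "compact_op (\<lambda>y. diag_act e (B y))"
proof -
  obtain M where M0: "M > 0" and M: "\<And>i. ent (e i) \<le> M" using ent_bounded[OF lim] by blast
  obtain C where C0: "C > 0" and C: "\<And>x. x \<in> l2 \<Longrightarrow> l2norm (B x) \<le> C * l2norm x"
    using bop_bound[OF B] by blast
  show ?thesis
  proof (rule compact_tail)
    show "diag_act e (B x) \<in> l2" if "x \<in> l2" for x by (rule diag_l2(1)[of e M, OF M bop_l2[OF B that]])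
    show "l2norm (diag_act e (B x)) \<le> M * C" if "x \<in> l2" "l2norm x \<le> 1" for x
    proof -
      have "l2norm (diag_act e (B x)) \<le> M * l2norm (B x)" by (rule diag_l2(2)[of e M, OF M bop_l2[OF B that(1)]])
      also have "\<dots> \<le> M * (C * l2norm x)" by (rule mult_left_mono[OF C[OF that(1)]]) (use M0 in simp)
      also have "\<dots> \<le> M * (C * 1)" using that(2) M0 C0 by (intro mult_left_mono) auto
      finally show ?thesis by simp
    qed
    fix eps :: real assume eps: "eps > 0"
    have "eventually (\<lambda>i. ent (e i) < eps / C) sequentially"
      by (rule order_tendstoD(2)[OF lim]) (use eps C0 in simp)
    then obtain N where N: "\<And>i. i \<ge> N \<Longrightarrow> ent (e i) < eps / C" unfolding eventually_sequentially by blast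
    define e' where "e' i = (if i < N then 0 else e i)" for i
    have e': "ent (e' i) \<le> eps / C" for i
    proof (cases "i < N")
      case True
      then show ?thesis using eps C0 by (simp add: e'_def ent_def)
    next
      case False
      then show ?thesis using N[of i] by (simp add: e'_def)
    qed
    have "l2norm (\<lambda>p. if p \<in> {..<N} \<times> UNIV then 0 else diag_act e (B x) p) \<le> eps" if x: "x \<in> l2" "l2norm x \<le> 1" for x
    proof -
      have eq: "(\<lambda>p. if p \<in> {..<N} \<times> UNIV then 0 else diag_act e (B x) p) = diag_act e' (B x)"
      proof
        fix p :: "nat \<times> 'm" obtain i j where p: "p = (i, j)" by (cases p)
        show "(if p \<in> {..<N} \<times> UNIV then 0 else diag_act e (B x) p) = diag_act e' (B x) p"
          unfolding p diag_act_eq by (simp add: e'_def)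
      qed
      have "l2norm (diag_act e' (B x)) \<le> (eps / C) * l2norm (B x)"
        by (rule diag_l2(2)[of e' "eps / C", OF e' bop_l2[OF B x(1)]])
      also have "\<dots> \<le> (eps / C) * (C * l2norm x)" by (rule mult_left_mono[OF C[OF x(1)]]) (use eps C0 in simp)
      also have "\<dots> \<le> (eps / C) * (C * 1)" using x(2) eps C0 by (intro mult_left_mono) auto
      also have "\<dots> = eps" using C0 by simp
      finally show ?thesis unfolding eq .
    qed
    then show "\<exists>A. finite A \<and> (\<forall>x\<in>l2. l2norm x \<le> 1 \<longrightarrow> l2norm (\<lambda>p. if p \<in> A then 0 else diag_act e (B x) p) \<le> eps)"
      by (intro exI[of _ "{..<N} \<times> UNIV"]) auto
  qed
qed

lemma diag_diff_mat:
  fixes A B :: "nat \<Rightarrow> complex^'m^'m"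
  shows "diag_act (\<lambda>i. A i - B i) x = (\<lambda>p. diag_act A x p - diag_act B x p)"
proof
  fix p :: "nat \<times> 'm" obtain i j where p: "p = (i, j)" by (cases p)
  show "diag_act (\<lambda>i. A i - B i) x p = diag_act A x p - diag_act B x p"
    unfolding p diag_act_eq by (simp add: matrix_vector_mult_diff_rdistrib)
qed

lemma diag_diff_vec:
  fixes d :: "nat \<Rightarrow> complex^'m^'m"
  shows "diag_act d (\<lambda>p. x p - y p) = (\<lambda>p. diag_act d x p - diag_act d y p)"
proof
  fix p :: "nat \<times> 'm" obtain i j where p: "p = (i, j)" by (cases p)
  show "diag_act d (\<lambda>p. x p - y p) p = diag_act d x p - diag_act d y p"
    unfolding p diag_act_eq mv_nth by (simp add: sum_subtractf right_diff_distrib)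
qed

lemma ent_diff: "ent (A - B) \<le> ent A + ent (B::complex^'m^'m)"
proof -
  have "ent (A - B) \<le> (\<Sum>j\<in>UNIV. \<Sum>k\<in>UNIV. cmod (A $ j $ k) + cmod (B $ j $ k))"
    unfolding ent_def by (intro sum_mono) (simp add: norm_triangle_ineq4)
  then show ?thesis by (simp add: ent_def sum.distrib)
qed

lemma ent_lim:
  fixes u v :: "nat \<Rightarrow> complex^'m^'m"
  assumes "(\<lambda>i. mnorm (u i - v i)) \<longlonglongrightarrow> 0"
  shows "(\<lambda>i. ent (u i - v i)) \<longlonglongrightarrow> 0"
proof (rule Lim_null_comparison)
  show "\<forall>\<^sub>F i in sequentially. norm (ent (u i - v i)) \<le> real CARD('m) * real CARD('m) * mnorm (u i - v i)"
    using ent_le_mnorm[of "u _ - v _"] ent_nonneg[of "u _ - v _"] by (intro always_eventually allI) simp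
  show "(\<lambda>i. real CARD('m) * real CARD('m) * mnorm (u i - v i)) \<longlonglongrightarrow> 0"
    using tendsto_mult[OF tendsto_const assms, of "real CARD('m) * real CARD('m)"] by simp
qed

lemma part1:
  fixes u v :: "nat \<Rightarrow> complex^'m^'m"
  assumes Mu: "\<And>i. ent (u i) \<le> M" and Mv: "\<And>i. ent (v i) \<le> M"
    and lim: "(\<lambda>i. mnorm (u i - v i)) \<longlonglongrightarrow> 0" and T: "bounded_op T"
  shows "compact_op (\<lambda>y p. Phi u T y p - Phi v T y p)"
proof -
  define cu where "cu i = cadj (u i)" for i
  define cv where "cv i = cadj (v i)" for i
  have Mcu: "ent (cu i) \<le> M" for i using Mu by (simp add: cu_def ent_cadj)
  have Mcv: "ent (cv i) \<le> M" for i using Mv by (simp add: cv_def ent_cadj)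
  have T1: "bounded_op (tens1 T :: (nat \<times> 'm \<Rightarrow> complex) \<Rightarrow> _)" by (rule tens1_bop[OF T])
  have l1: "(\<lambda>i. ent (u i - v i)) \<longlonglongrightarrow> 0" by (rule ent_lim[OF lim])
  have l2: "(\<lambda>i. ent (cu i - cv i)) \<longlonglongrightarrow> 0"
    using l1 by (simp add: cu_def cv_def cadj_diff[symmetric] ent_cadj)
  define K1 where "K1 = (\<lambda>y. diag_act (\<lambda>i. u i - v i) (tens1 T (diag_act cu y)))"
  define K0 where "K0 = (\<lambda>y::nat \<times> 'm \<Rightarrow> complex. diag_act (\<lambda>i. cu i - cv i) y)"
  define K2 where "K2 = (\<lambda>y. diag_act v (tens1 T (K0 y)))"
  have bK1: "bounded_op (\<lambda>y. tens1 T (diag_act cu y))" by (rule bop_comp[OF T1 diag_bop[of cu M, OF Mcu]])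
  have cK1: "compact_op K1" unfolding K1_def by (rule diag_compact[OF bK1 l1])
  have cK0: "compact_op K0" unfolding K0_def using diag_compact[OF bop_id l2] by simp
  have Md: "ent (cu i - cv i) \<le> M + M" for i
    using ent_diff[of "cu i" "cv i"] Mcu[of i] Mcv[of i] by linarith
  have Muv: "ent (u i - v i) \<le> M + M" for i
    using ent_diff[of "u i" "v i"] Mu[of i] Mv[of i] by linarith
  have lK0: "K0 y \<in> l2" if "y \<in> l2" for y unfolding K0_def by (rule diag_l2(1)[of "\<lambda>i. cu i - cv i" "M + M", OF Md that])
  have bV: "bounded_op (\<lambda>z. diag_act v (tens1 T z))" by (rule bop_comp[OF diag_bop[of v M, OF Mv] T1])
  have cK2: "compact_op K2" unfolding K2_def by (rule compact_comp_left[OF cK0 lK0 bV])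
  have lK1: "K1 y \<in> l2" if "y \<in> l2" for y
    unfolding K1_def by (rule diag_l2(1)[of "\<lambda>i. u i - v i" "M + M", OF Muv bop_l2[OF bK1 that]])
  have lK2: "K2 y \<in> l2" if "y \<in> l2" for y using bop_l2[OF bV lK0[OF that]] unfolding K2_def .
  have sum: "compact_op (\<lambda>y p. K1 y p + K2 y p)" by (rule compact_add[OF cK1 lK1 cK2 lK2])
  show ?thesis
  proof (rule compact_op_cong[OF sum])
    fix y :: "nat \<times> 'm \<Rightarrow> complex" assume y: "y \<in> l2"
    define z where "z = diag_act cu y"
    define w where "w = diag_act cv y"
    have zl: "z \<in> l2" unfolding z_def by (rule diag_l2(1)[of cu M, OF Mcu y])
    have wl: "w \<in> l2" unfolding w_def by (rule diag_l2(1)[of cv M, OF Mcv y])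
    have "K0 y = (\<lambda>p. z p - w p)" unfolding K0_def z_def w_def by (rule diag_diff_mat)
    then have "tens1 T (K0 y) = (\<lambda>p. tens1 T z p - tens1 T w p)" using bop_diff[OF T1 zl wl] by simp
    then have e2: "K2 y = (\<lambda>p. diag_act v (tens1 T z) p - diag_act v (tens1 T w) p)"
      unfolding K2_def by (simp add: diag_diff_vec)
    have e1: "K1 y = (\<lambda>p. diag_act u (tens1 T z) p - diag_act v (tens1 T z) p)"
      unfolding K1_def z_def by (rule diag_diff_mat)
    have pu: "Phi u T y = diag_act u (tens1 T z)"
      unfolding Phi_def z_def cu_def by simp
    have pv: "Phi v T y = diag_act v (tens1 T w)"
      unfolding Phi_def w_def cv_def by simp
    show "(\<lambda>p. K1 y p + K2 y p) = (\<lambda>p. Phi u T y p - Phi v T y p)"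
      unfolding e1 e2 pu pv by (simp add: algebra_simps)
  qed
qed



definition blk :: "(nat \<Rightarrow> nat) \<Rightarrow> nat \<Rightarrow> nat" where
  "blk a k = (LEAST n. k < a (Suc n))"

lemma blk_mem:
  assumes "a 0 = 0" "strict_mono a"
  shows "a (blk a k) \<le> k" "k < a (Suc (blk a k))"
proof -
  have "Suc k \<le> a (Suc k)" by (rule seq_suble[OF assms(2)])
  then have ex: "k < a (Suc k)" by simp
  show lt: "k < a (Suc (blk a k))" unfolding blk_def by (rule LeastI[of _ k]) (rule ex)
  show "a (blk a k) \<le> k"
  proof (cases "blk a k")
    case 0
    then show ?thesis using assms(1) by simp
  next
    case (Suc m)
    then have "m < blk a k" by simp
    then have "\<not> k < a (Suc m)" unfolding blk_def by (rule not_less_Least)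
    then show ?thesis using Suc by simp
  qed
qed

lemma blk_unique:
  assumes "a 0 = 0" "strict_mono a" "a n \<le> k" "k < a (Suc n)"
  shows "blk a k = n"
proof -
  have le: "blk a k \<le> n" unfolding blk_def by (rule Least_le) (rule assms(4))
  have "\<not> blk a k < n"
  proof
    assume "blk a k < n"
    then have "Suc (blk a k) \<le> n" by simp
    then have "a (Suc (blk a k)) \<le> a n" by (rule strict_mono_leD[OF assms(2)])
    then show False using blk_mem(2)[OF assms(1,2), of k] assms(3) by simp
  qed
  then show ?thesis using le by simp
qed

lemma blk_ge:
  assumes "a 0 = 0" "strict_mono a" "a N \<le> k"
  shows "N \<le> blk a k"
proof (rule ccontr)
  assume "\<not> N \<le> blk a k"
  then have "Suc (blk a k) \<le> N" by simp
  then have "a (Suc (blk a k)) \<le> a N" by (rule strict_mono_leD[OF assms(2)])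
  then show False using blk_mem(2)[OF assms(1,2), of k] assms(3) by simp
qed

lemma blk_tendsto:
  assumes "a 0 = 0" "strict_mono a"
  shows "filterlim (blk a) at_top sequentially"
  unfolding filterlim_at_top eventually_sequentially
  using blk_ge[OF assms] by blast

lemma l2_proj:
  assumes "f \<in> l2"
  shows "proj S f \<in> l2"
proof -
  have "(\<Sum>i\<in>F. (cmod (proj S f i))\<^sup>2) \<le> nsq f" if "finite F" for F
  proof -
    have "(\<Sum>i\<in>F. (cmod (proj S f i))\<^sup>2) \<le> (\<Sum>i\<in>F. (cmod (f i))\<^sup>2)"
      by (rule sum_mono) (simp add: proj_def)
    also have "\<dots> \<le> nsq f" by (rule sum_le_nsq[OF assms that])
    finally show ?thesis .
  qed
  then show ?thesis using l2_boundI(1) by blast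
qed

lemma bop_sum:
  assumes T: "bounded_op T" and L: "finite L" and f: "\<And>l. l \<in> L \<Longrightarrow> f l \<in> l2"
  shows "(\<lambda>k. \<Sum>l\<in>L. c l * f l k) \<in> l2 \<and> T (\<lambda>k. \<Sum>l\<in>L. c l * f l k) = (\<lambda>k. \<Sum>l\<in>L. c l * T (f l) k)"
  using L f
proof (induction L rule: finite_induct)
  case empty
  have "T (\<lambda>i. 0 * (0::complex)) = (\<lambda>i. 0 * T (\<lambda>_. 0) i)" by (rule bop_scale[OF T l2_zero(1)])
  then show ?case using l2_zero(1) by simp
next
  case (insert x F)
  have fx: "f x \<in> l2" using insert by simp
  have IH: "(\<lambda>k. \<Sum>l\<in>F. c l * f l k) \<in> l2" "T (\<lambda>k. \<Sum>l\<in>F. c l * f l k) = (\<lambda>k. \<Sum>l\<in>F. c l * T (f l) k)"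
    using insert by auto
  have cx: "(\<lambda>k. c x * f x k) \<in> l2" by (rule l2_scale(1)[OF fx])
  have eq: "(\<lambda>k. \<Sum>l\<in>insert x F. c l * f l k) = (\<lambda>k. c x * f x k + (\<Sum>l\<in>F. c l * f l k))"
    using insert by simp
  have "T (\<lambda>k. c x * f x k + (\<Sum>l\<in>F. c l * f l k)) = (\<lambda>k. T (\<lambda>k. c x * f x k) k + T (\<lambda>k. \<Sum>l\<in>F. c l * f l k) k)"
    by (rule bop_add[OF T cx IH(1)])
  also have "\<dots> = (\<lambda>k. c x * T (f x) k + (\<Sum>l\<in>F. c l * T (f l) k))"
    unfolding IH(2) bop_scale[OF T fx] by simp
  finally show ?case unfolding eq using l2_add(1)[OF cx IH(1)] insert by simp
qed

lemma D_alg_loc: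
  assumes "T \<in> D_alg E" "f \<in> l2" "k \<in> E n"
  shows "T f k = T (proj (E n) f) k"
proof -
  have "T (proj (E n) f) = proj (E n) (T f)" using assms(1,2) unfolding D_alg_def by blast
  then show ?thesis using assms(3) by (simp add: proj_def)
qed

lemma tens1_comm:
  fixes C :: "nat \<Rightarrow> complex^'m^'m" and z :: "nat \<times> 'm \<Rightarrow> complex"
  assumes a0: "a 0 = 0" and sm: "strict_mono a" and T: "T \<in> D_alg (\<lambda>n. {a n..<a (Suc n)})"
    and z: "z \<in> l2" and M: "\<And>n. ent (C n) \<le> M"
  shows "tens1 T (diag_act (\<lambda>i. C (blk a i)) z) = diag_act (\<lambda>i. C (blk a i)) (tens1 T z)"
proof
  fix p :: "nat \<times> 'm"
  obtain k j where p: "p = (k, j)" by (cases p)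
  define n where "n = blk a k"
  define E where "E = (\<lambda>n. {a n..<a (Suc n)})"
  have Tb: "bounded_op T" using T unfolding D_alg_def by blast
  have TE: "T \<in> D_alg E" using T unfolding E_def .
  have kE: "k \<in> E n" unfolding E_def n_def using blk_mem[OF a0 sm, of k] by simp
  have Mb: "ent (C (blk a i)) \<le> M" for i by (rule M)
  define f where "f = (\<lambda>k'. diag_act (\<lambda>i. C (blk a i)) z (k', j))"
  have fl: "f \<in> l2" unfolding f_def by (rule slice_l2(1)[OF diag_l2(1)[of "\<lambda>i. C (blk a i)" M, OF Mb z]])
  define g where "g = (\<lambda>l. proj (E n) (\<lambda>k. z (k, l)))"
  have gl: "g l \<in> l2" for l unfolding g_def by (rule l2_proj[OF slice_l2(1)[OF z]])
  have pf: "proj (E n) f = (\<lambda>k'. \<Sum>l\<in>UNIV. C n $ j $ l * g l k')"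
  proof
    fix k'
    show "proj (E n) f k' = (\<Sum>l\<in>UNIV. C n $ j $ l * g l k')"
    proof (cases "k' \<in> E n")
      case True
      then have "blk a k' = n" unfolding E_def using blk_unique[OF a0 sm] by simp
      then show ?thesis using True unfolding f_def g_def proj_def by (simp add: diag_act_eq mv_nth)
    next
      case False
      then show ?thesis unfolding f_def g_def proj_def by simp
    qed
  qed
  have "tens1 T (diag_act (\<lambda>i. C (blk a i)) z) p = T f k" unfolding p tens1_eq f_def ..
  also have "\<dots> = T (proj (E n) f) k" by (rule D_alg_loc[OF TE fl kE])
  also have "\<dots> = (\<Sum>l\<in>UNIV. C n $ j $ l * T (g l) k)"
  proof -
    have fU: "finite (UNIV :: 'm set)" by simp
    show ?thesis unfolding pf using bop_sum[OF Tb fU, of g "\<lambda>l. C n $ j $ l"] gl by simp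
  qed
  also have "\<dots> = (\<Sum>l\<in>UNIV. C n $ j $ l * T (\<lambda>k. z (k, l)) k)"
    unfolding g_def using D_alg_loc[OF TE slice_l2(1)[OF z] kE] by simp
  also have "\<dots> = diag_act (\<lambda>i. C (blk a i)) (tens1 T z) p"
    unfolding p diag_act_eq mv_nth n_def by (simp add: tens1_eq)
  finally show "tens1 T (diag_act (\<lambda>i. C (blk a i)) z) p = diag_act (\<lambda>i. C (blk a i)) (tens1 T z) p" .
qed

lemma diag_comp:
  fixes A B :: "nat \<Rightarrow> complex^'m^'m"
  shows "diag_act A (diag_act B x) = diag_act (\<lambda>i. A i ** B i) x"
proof
  fix p :: "nat \<times> 'm"
  obtain i j where p: "p = (i, j)" by (cases p)
  have "vat (diag_act B x) i = B i *v vat x i" by (simp add: vec_eq_iff diag_act_eq)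
  then show "diag_act A (diag_act B x) p = diag_act (\<lambda>i. A i ** B i) x p"
    unfolding p diag_act_eq by (simp add: matrix_vector_mul_assoc)
qed

lemma unitary_ent_all:
  assumes "unitary_mat (A::complex^'m^'m)"
  shows "ent A \<le> real CARD('m) * real CARD('m)"
  using unitary_ent[OF assms] .

lemma phi_block:
  fixes u C :: "nat \<Rightarrow> complex^'m^'m" and y :: "nat \<times> 'm \<Rightarrow> complex"
  assumes a0: "a 0 = 0" and sm: "strict_mono a" and T: "T \<in> D_alg (\<lambda>n. {a n..<a (Suc n)})"
    and u: "\<And>i. unitary_mat (u i)" and C: "\<And>n. unitary_mat (C n)" and y: "y \<in> l2"
  shows "Phi (\<lambda>i. u i ** cadj (C (blk a i))) T y = Phi u T y"
proof -
  define cb where "cb i = C (blk a i)" for i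
  define M where "M = real CARD('m) * real CARD('m)"
  have Mcu: "ent (cadj (u i)) \<le> M" for i unfolding M_def by (rule unitary_ent[OF unitary_cadj[OF u]])
  have MC: "ent (C n) \<le> M" for n unfolding M_def by (rule unitary_ent[OF C])
  define z where "z = diag_act (\<lambda>i. cadj (u i)) y"
  have zl: "z \<in> l2" unfolding z_def by (rule diag_l2(1)[of "\<lambda>i. cadj (u i)" M, OF Mcu y])
  have ca: "cadj (u i ** cadj (cb i)) = cb i ** cadj (u i)" for i by (simp add: cadj_mult cadj_cadj)
  have 1: "diag_act (\<lambda>i. cadj (u i ** cadj (cb i))) y = diag_act cb z"
    unfolding ca z_def by (simp add: diag_comp)
  have 2: "tens1 T (diag_act cb z) = diag_act cb (tens1 T z)"
    unfolding cb_def by (rule tens1_comm[OF a0 sm T zl MC])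
  have mm: "(u i ** cadj (cb i)) ** cb i = u i" for i
  proof -
    have "cadj (cb i) ** cb i = mat 1" using C unfolding cb_def unitary_mat_def by blast
    then show ?thesis by (simp add: matrix_mul_assoc[symmetric])
  qed
  have 3: "diag_act (\<lambda>i. u i ** cadj (cb i)) (diag_act cb X) = diag_act u X" for X :: "nat \<times> 'm \<Rightarrow> complex"
    by (simp add: diag_comp mm)
  have "Phi (\<lambda>i. u i ** cadj (cb i)) T y = diag_act (\<lambda>i. u i ** cadj (cb i)) (tens1 T (diag_act (\<lambda>i. cadj (u i ** cadj (cb i))) y))"
    unfolding Phi_def by simp
  also have "\<dots> = diag_act (\<lambda>i. u i ** cadj (cb i)) (tens1 T (diag_act cb z))" unfolding 1 ..
  also have "\<dots> = diag_act (\<lambda>i. u i ** cadj (cb i)) (diag_act cb (tens1 T z))" unfolding 2 ..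
  also have "\<dots> = diag_act u (tens1 T z)" by (rule 3)
  also have "\<dots> = Phi u T y" unfolding Phi_def z_def by simp
  finally show ?thesis unfolding cb_def .
qed

lemma Delta_upper:
  assumes "finite I" "i \<in> I" "j \<in> I"
  shows "mnorm (u i ** cadj (u j) - v i ** cadj (v j)) \<le> Delta I u v"
proof -
  define f where "f p = mnorm (u (fst p) ** cadj (u (snd p)) - v (fst p) ** cadj (v (snd p)))" for p
  have mem: "(i, j) \<in> I \<times> I" using assms by simp
  have fin: "finite (f ` (I \<times> I))" using assms(1) by simp
  have bdd: "bdd_above (f ` (I \<times> I))" by (rule bdd_above_finite[OF fin])
  have "f (i, j) \<le> (SUP p\<in>I \<times> I. f p)" by (rule cSUP_upper[OF mem bdd])
  then show ?thesis unfolding Delta_def f_def by simp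
qed

lemma part2_if:
  fixes u v :: "nat \<Rightarrow> complex^'m^'m"
  assumes u: "\<And>i. unitary_mat (u i)" and v: "\<And>i. unitary_mat (v i)"
    and a0: "a 0 = 0" and sm: "strict_mono a"
    and lim: "(\<lambda>n. Delta {a n..<a (Suc n)} u v) \<longlonglongrightarrow> 0"
    and T: "T \<in> D_alg (\<lambda>n. {a n..<a (Suc n)})"
  shows "compact_op (\<lambda>y p. Phi u T y p - Phi v T y p)"
proof -
  define w where "w i = u i ** cadj (u (a (blk a i)))" for i
  define w' where "w' i = v i ** cadj (v (a (blk a i)))" for i
  define M where "M = real CARD('m) * real CARD('m)"
  have wu: "unitary_mat (w i)" for i unfolding w_def by (rule unitary_mult[OF u unitary_cadj[OF u]])
  have wv: "unitary_mat (w' i)" for i unfolding w'_def by (rule unitary_mult[OF v unitary_cadj[OF v]])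
  have Mw: "ent (w i) \<le> M" for i unfolding M_def by (rule unitary_ent[OF wu])
  have Mw': "ent (w' i) \<le> M" for i unfolding M_def by (rule unitary_ent[OF wv])
  have Tb: "bounded_op T" using T unfolding D_alg_def by blast
  have bnd: "mnorm (w i - w' i) \<le> Delta {a (blk a i)..<a (Suc (blk a i))} u v" for i
  proof -
    have "a (blk a i) < a (Suc (blk a i))" using sm by (simp add: strict_mono_def)
    then have m1: "a (blk a i) \<in> {a (blk a i)..<a (Suc (blk a i))}" by simp
    have m2: "i \<in> {a (blk a i)..<a (Suc (blk a i))}" using blk_mem[OF a0 sm, of i] by simp
    have m3: "finite {a (blk a i)..<a (Suc (blk a i))}" by simp
    show ?thesis unfolding w_def w'_def by (rule Delta_upper[OF m3 m2 m1])
  qed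
  have limc: "(\<lambda>i. Delta {a (blk a i)..<a (Suc (blk a i))} u v) \<longlonglongrightarrow> 0"
    using filterlim_compose[OF lim blk_tendsto[OF a0 sm]] .
  have limw: "(\<lambda>i. mnorm (w i - w' i)) \<longlonglongrightarrow> 0"
  proof (rule Lim_null_comparison[OF _ limc])
    show "\<forall>\<^sub>F i in sequentially. norm (mnorm (w i - w' i)) \<le> Delta {a (blk a i)..<a (Suc (blk a i))} u v"
      using bnd mnorm_nonneg[of "w _ - w' _"] by (intro always_eventually allI) simp
  qed
  have c: "compact_op (\<lambda>y p. Phi w T y p - Phi w' T y p)" by (rule part1[OF Mw Mw' limw Tb])
  show ?thesis
  proof (rule compact_op_cong[OF c])
    fix y :: "nat \<times> 'm \<Rightarrow> complex" assume y: "y \<in> l2"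
    have "Phi w T y = Phi u T y" unfolding w_def by (rule phi_block[OF a0 sm T u u y])
    moreover have "Phi w' T y = Phi v T y" unfolding w'_def by (rule phi_block[OF a0 sm T v v y])
    ultimately show "(\<lambda>p. Phi w T y p - Phi w' T y p) = (\<lambda>p. Phi u T y p - Phi v T y p)" by simp
  qed
qed



definition shiftop :: "(nat \<Rightarrow> nat) \<Rightarrow> (nat \<Rightarrow> nat) \<Rightarrow> (nat \<Rightarrow> nat) \<Rightarrow> (nat \<Rightarrow> complex) \<Rightarrow> nat \<Rightarrow> complex" where
  "shiftop a I J f k = (if k = I (blk a k) then f (J (blk a k)) else 0)"

definition atv :: "nat \<Rightarrow> complex^'m \<Rightarrow> nat \<times> 'm \<Rightarrow> complex" where
  "atv m y = (\<lambda>(k, l). if k = m then y $ l else 0)"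

lemma atv_eq: "atv m y (k, l) = (if k = m then y $ l else 0)"
  by (simp add: atv_def)

lemma diag_atv:
  fixes d :: "nat \<Rightarrow> complex^'m^'m"
  shows "diag_act d (atv m y) = atv m (d m *v y)"
proof
  fix p :: "nat \<times> 'm" obtain k l where p: "p = (k, l)" by (cases p)
  have "vat (atv m y) k = (if k = m then y else 0)" by (simp add: vec_eq_iff atv_eq)
  then show "diag_act d (atv m y) p = atv m (d m *v y) p"
    unfolding p diag_act_eq atv_eq by simp
qed

lemma atv_l2:
  fixes y :: "complex^'m"
  shows "atv m y \<in> l2"
    "l2norm (atv m y) = norm y"
proof -
  have fin: "finite ({m} \<times> (UNIV :: 'm set))" by simp
  have z: "\<And>p. p \<notin> {m} \<times> UNIV \<Longrightarrow> atv m y p = 0" by (auto simp: atv_def split: if_splits)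
  show "atv m y \<in> l2" by (rule l2_finite_support(1)[OF fin z])
  have "nsq (atv m y) = (\<Sum>p\<in>{m} \<times> UNIV. (cmod (atv m y p))\<^sup>2)" by (rule l2_finite_support(2)[OF fin z])
  also have "{m} \<times> (UNIV :: 'm set) = (\<lambda>l. (m, l)) ` UNIV" by auto
  also have "(\<Sum>p\<in>(\<lambda>l. (m, l)) ` (UNIV :: 'm set). (cmod (atv m y p))\<^sup>2) = (\<Sum>l\<in>UNIV. (cmod (atv m y (m, l)))\<^sup>2)"
    by (subst sum.reindex) (auto simp: inj_on_def)
  also have "\<dots> = (\<Sum>l\<in>UNIV. (cmod (y $ l))\<^sup>2)" by (simp add: atv_eq)
  also have "\<dots> = (norm y)\<^sup>2" by (simp add: norm_vec_sq)
  finally show "l2norm (atv m y) = norm y" by (simp add: l2norm_nsq)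
qed

locale blocks =
  fixes a I J :: "nat \<Rightarrow> nat"
  assumes a0: "a 0 = 0" and sm: "strict_mono a"
    and I: "\<And>n. I n \<in> {a n..<a (Suc n)}" and J: "\<And>n. J n \<in> {a n..<a (Suc n)}"
begin

lemma blk_I: "blk a (I n) = n"
  using I[of n] blk_unique[OF a0 sm] by simp

lemma blk_J: "blk a (J n) = n"
  using J[of n] blk_unique[OF a0 sm] by simp

lemma inj_J: "inj J"
  by (metis blk_J injI)

lemma shift_bound:
  assumes f: "f \<in> l2"
  shows "shiftop a I J f \<in> l2" "l2norm (shiftop a I J f) \<le> 1 * l2norm f"
proof -
  have "(\<Sum>k\<in>F. (cmod (shiftop a I J f k))\<^sup>2) \<le> (1 * l2norm f)\<^sup>2" if F: "finite F" for F
  proof -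
    define R where "R = {k \<in> F. k = I (blk a k)}"
    have fR: "finite R" unfolding R_def using F by simp
    have "(\<Sum>k\<in>F. (cmod (shiftop a I J f k))\<^sup>2) = (\<Sum>k\<in>F. if k = I (blk a k) then (cmod (f (J (blk a k))))\<^sup>2 else 0)"
      by (rule sum.cong) (auto simp: shiftop_def)
    also have "\<dots> = (\<Sum>k\<in>R. (cmod (f (J (blk a k))))\<^sup>2)"
      unfolding R_def using F by (simp add: sum.inter_filter)
    also have "\<dots> = (\<Sum>n\<in>blk a ` R. (cmod (f (J n)))\<^sup>2)"
    proof -
      have "inj_on (blk a) R" unfolding R_def by (intro inj_onI) (metis (mono_tags, lifting) mem_Collect_eq)
      then show ?thesis by (simp add: sum.reindex)
    qed
    also have "\<dots> = (\<Sum>m\<in>J ` (blk a ` R). (cmod (f m))\<^sup>2)"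
      using inj_J by (simp add: sum.reindex inj_on_subset[OF inj_J])
    also have "\<dots> \<le> nsq f" by (rule sum_le_nsq[OF f]) (use fR in simp)
    also have "\<dots> = (1 * l2norm f)\<^sup>2" by (simp add: l2norm_sq)
    finally show ?thesis .
  qed
  then show "shiftop a I J f \<in> l2" "l2norm (shiftop a I J f) \<le> 1 * l2norm f"
    using l2_normI[of "shiftop a I J f" "1 * l2norm f"] l2norm_nonneg[of f] by auto
qed

lemma shift_D: "shiftop a I J \<in> D_alg (\<lambda>n. {a n..<a (Suc n)})"
  unfolding D_alg_def bounded_op_def
proof (intro CollectI conjI ballI allI)
  show "shiftop a I J x \<in> l2" if "x \<in> l2" for x using shift_bound(1)[OF that] .
  show "shiftop a I J (\<lambda>i. x i + y i) = (\<lambda>i. shiftop a I J x i + shiftop a I J y i)" for x y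
    by (auto simp: shiftop_def)
  show "shiftop a I J (\<lambda>i. c * x i) = (\<lambda>i. c * shiftop a I J x i)" for x c
    by (auto simp: shiftop_def)
  show "\<exists>C. \<forall>x\<in>l2. l2norm (shiftop a I J x) \<le> C * l2norm x"
    using shift_bound(2) by blast
  fix n x
  show "shiftop a I J (proj {a n..<a (Suc n)} x) = proj {a n..<a (Suc n)} (shiftop a I J x)"
  proof
    fix k
    show "shiftop a I J (proj {a n..<a (Suc n)} x) k = proj {a n..<a (Suc n)} (shiftop a I J x) k"
    proof (cases "k \<in> {a n..<a (Suc n)}")
      case True
      then have "blk a k = n" using blk_unique[OF a0 sm] by simp
      then show ?thesis using True J[of n] by (simp add: shiftop_def proj_def blk_I)
    next
      case False
      have "J (blk a k) \<notin> {a n..<a (Suc n)}"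
      proof
        assume "J (blk a k) \<in> {a n..<a (Suc n)}"
        then have "blk a (J (blk a k)) = n" using blk_unique[OF a0 sm] by simp
        then have "blk a k = n" by (simp add: blk_J)
        then show False using False blk_mem[OF a0 sm, of k] by simp
      qed
      then show ?thesis using False by (auto simp: shiftop_def proj_def)
    qed
  qed
qed

lemma tens1_atv:
  fixes y :: "complex^'m"
  shows "tens1 (shiftop a I J) (atv (J n) y) = atv (I n) y"
proof
  fix p :: "nat \<times> 'm" obtain k l where p: "p = (k, l)" by (cases p)
  have "(k = I (blk a k) \<and> J (blk a k) = J n) \<longleftrightarrow> k = I n"
    using inj_J blk_I by (metis injD)
  then show "tens1 (shiftop a I J) (atv (J n) y) p = atv (I n) y p"
    unfolding p tens1_eq shiftop_def atv_eq by auto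
qed

lemma phi_atv: "Phi u (shiftop a I J) (atv (J n) z) = atv (I n) ((u (I n) ** cadj (u (J n))) *v z)"
  unfolding Phi_def by (simp add: diag_atv tens1_atv matrix_vector_mul_assoc)

end



lemma Delta_nonneg:
  assumes "finite I" "i \<in> I"
  shows "Delta I u v \<ge> 0"
  using Delta_upper[OF assms assms(2), of u v] mnorm_nonneg[of "u i ** cadj (u i) - v i ** cadj (v i)"] by linarith

lemma Delta_attained:
  assumes "finite I" "I \<noteq> {}"
  shows "\<exists>p\<in>I \<times> I. Delta I u v \<le> mnorm (u (fst p) ** cadj (u (snd p)) - v (fst p) ** cadj (v (snd p)))"
proof -
  define f where "f p = mnorm (u (fst p) ** cadj (u (snd p)) - v (fst p) ** cadj (v (snd p)))" for p
  have fin: "finite (f ` (I \<times> I))" using assms(1) by simp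
  have ne: "f ` (I \<times> I) \<noteq> {}" using assms(2) by simp
  have "Delta I u v = Sup (f ` (I \<times> I))" unfolding Delta_def f_def by simp
  also have "\<dots> = Max (f ` (I \<times> I))" by (rule cSup_eq_Max[OF fin ne])
  finally have "Delta I u v \<in> f ` (I \<times> I)" using Max_in[OF fin ne] by simp
  then show ?thesis unfolding f_def by force
qed

lemma mv_scaleR: "(A::complex^'m^'m) *v (r *\<^sub>R x) = r *\<^sub>R (A *v x)"
  using matrix_vector_mul_linear[of A] by (simp add: linear_iff)

lemma big_vector:
  assumes "e > 0" "e \<le> mnorm (A::complex^'m^'m)"
  shows "\<exists>z. norm z = 1 \<and> e / 2 < norm (A *v z)"
proof -
  have "\<exists>x. e / 2 * norm x < norm (A *v x)"
  proof (rule ccontr)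
    assume "\<not> ?thesis"
    then have "\<And>x. norm (A *v x) \<le> e / 2 * norm x" by (simp add: not_less)
    then have "mnorm A \<le> e / 2" unfolding mnorm_def by (rule onorm_le)
    then show False using assms by simp
  qed
  then obtain x where x: "e / 2 * norm x < norm (A *v x)" by blast
  then have nx: "norm x > 0" using assms(1) by (cases "x = 0") auto
  define z where "z = (1 / norm x) *\<^sub>R x"
  have "norm z = 1" unfolding z_def using nx by simp
  moreover have "norm (A *v z) = norm (A *v x) / norm x" unfolding z_def mv_scaleR using nx by simp
  moreover have "e / 2 < norm (A *v x) / norm x" using x nx by (simp add: field_simps)
  ultimately show ?thesis by auto
qed

lemma atv_diff:
  fixes y1 y2 :: "complex^'m"
  shows "(\<lambda>p. atv m y1 p - atv m y2 p) = atv m (y1 - y2)"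
  by (auto simp: atv_def)

lemma atv_lower:
  fixes w :: "complex^'m" and d :: "nat \<times> 'm \<Rightarrow> complex"
  assumes "d \<in> l2" "\<And>l. d (m, l) = w $ l"
  shows "norm w \<le> l2norm d"
proof -
  have fin: "finite ((\<lambda>l. (m, l)) ` (UNIV :: 'm set))" by simp
  have "(norm w)\<^sup>2 = (\<Sum>l\<in>UNIV. (cmod (d (m, l)))\<^sup>2)" by (simp add: norm_vec_sq assms(2))
  also have "\<dots> = (\<Sum>p\<in>(\<lambda>l. (m, l)) ` (UNIV :: 'm set). (cmod (d p))\<^sup>2)"
    by (subst sum.reindex) (auto simp: inj_on_def)
  also have "\<dots> \<le> (l2norm d)\<^sup>2" by (rule sum_le_l2norm_sq[OF assms(1) fin])
  finally show ?thesis using l2norm_nonneg[of d] by (rule power2_le_imp_le)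
qed

lemma part2_onlyif:
  fixes u v :: "nat \<Rightarrow> complex^'m^'m"
  assumes a0: "a 0 = 0" and sm: "strict_mono a"
    and H: "\<forall>T\<in>D_alg (\<lambda>n. {a n..<a (Suc n)}). compact_op (\<lambda>y p. Phi u T y p - Phi v T y p)"
  shows "(\<lambda>n. Delta {a n..<a (Suc n)} u v) \<longlonglongrightarrow> 0"
proof (rule ccontr)
  define E where "E n = {a n..<a (Suc n)}" for n
  define Mf where "Mf i j = u i ** cadj (u j) - v i ** cadj (v j)" for i j
  have aE: "a n \<in> E n" for n unfolding E_def using sm by (simp add: strict_mono_def)
  have fE: "finite (E n)" for n unfolding E_def by simp
  have Dnn: "Delta (E n) u v \<ge> 0" for n by (rule Delta_nonneg[OF fE aE])
  assume "\<not> (\<lambda>n. Delta {a n..<a (Suc n)} u v) \<longlonglongrightarrow> 0"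
  then obtain eps where eps: "eps > 0" and inf: "\<And>N. \<exists>n\<ge>N. eps \<le> Delta (E n) u v"
    unfolding LIMSEQ_iff E_def using Dnn[unfolded E_def] by (auto simp: not_less)
  have "\<forall>n. \<exists>p. p \<in> E n \<times> E n \<and> Delta (E n) u v \<le> mnorm (Mf (fst p) (snd p))"
    using Delta_attained[OF fE] aE unfolding Mf_def by blast
  then obtain g where g: "\<And>n. g n \<in> E n \<times> E n" "\<And>n. Delta (E n) u v \<le> mnorm (Mf (fst (g n)) (snd (g n)))"
    by metis
  define I where "I n = fst (g n)" for n
  define J where "J n = snd (g n)" for n
  interpret blocks a I J
    by unfold_locales (use a0 sm g(1) in \<open>auto simp: I_def J_def E_def mem_Times_iff\<close>)
  define S where "S = {n. eps \<le> Delta (E n) u v}"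
  have infS: "infinite S" unfolding S_def infinite_nat_iff_unbounded_le using inf by blast
  have "\<forall>n. \<exists>z. n \<in> S \<longrightarrow> norm z = 1 \<and> eps / 2 < norm (Mf (I n) (J n) *v z)"
  proof
    fix n
    show "\<exists>z. n \<in> S \<longrightarrow> norm z = 1 \<and> eps / 2 < norm (Mf (I n) (J n) *v z)"
    proof (cases "n \<in> S")
      case True
      then have "eps \<le> mnorm (Mf (I n) (J n))" using g(2)[of n] unfolding S_def I_def J_def by simp
      then show ?thesis using big_vector[OF eps] by blast
    qed simp
  qed
  then obtain zf where zf: "\<And>n. n \<in> S \<Longrightarrow> norm (zf n) = 1" "\<And>n. n \<in> S \<Longrightarrow> eps / 2 < norm (Mf (I n) (J n) *v zf n)"
    by metis
  define T where "T = shiftop a I J"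
  define K where "K = (\<lambda>y p. Phi u T y p - Phi v T y p)"
  have cK: "compact_op K" unfolding K_def T_def using H shift_D by blast
  define s where "s n = atv (I n) (Mf (I n) (J n) *v zf n)" for n
  have Ks: "K (atv (J n) (zf n)) = s n" for n
    unfolding K_def T_def s_def phi_atv atv_diff Mf_def by (simp add: matrix_vector_mult_diff_rdistrib)
  have sl: "s n \<in> l2" for n unfolding s_def by (rule atv_l2(1))
  obtain F where fF: "finite F" and lF: "F \<subseteq> l2"
    and F: "\<forall>x\<in>l2. l2norm x \<le> 1 \<longrightarrow> (\<exists>y\<in>F. l2norm (\<lambda>i. K x i - y i) \<le> eps / 8)"
    using cK[unfolded compact_op_def, rule_format, of "eps / 8"] eps by auto
  have "\<forall>n. \<exists>y. n \<in> S \<longrightarrow> y \<in> F \<and> l2norm (\<lambda>i. s n i - y i) \<le> eps / 8"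
  proof
    fix n
    show "\<exists>y. n \<in> S \<longrightarrow> y \<in> F \<and> l2norm (\<lambda>i. s n i - y i) \<le> eps / 8"
    proof (cases "n \<in> S")
      case True
      have "atv (J n) (zf n) \<in> l2" "l2norm (atv (J n) (zf n)) \<le> 1"
        using atv_l2[of "J n" "zf n"] zf(1)[OF True] by auto
      then show ?thesis using F Ks[of n] by metis
    qed simp
  qed
  then obtain psi where psi: "\<And>n. n \<in> S \<Longrightarrow> psi n \<in> F" "\<And>n. n \<in> S \<Longrightarrow> l2norm (\<lambda>i. s n i - psi n i) \<le> eps / 8"
    by metis
  have "finite (psi ` S)" using psi(1) fF by (meson finite_subset image_subsetI)
  then obtain n0 where n0: "n0 \<in> S" and infn0: "infinite {n \<in> S. psi n = psi n0}"
    using pigeonhole_infinite[OF infS] by blast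
  have "{n \<in> S. psi n = psi n0} \<noteq> {n0}" using infn0 by auto
  moreover have "n0 \<in> {n \<in> S. psi n = psi n0}" using n0 by simp
  ultimately obtain n1 where n1: "n1 \<in> S" "psi n1 = psi n0" "n1 \<noteq> n0" by blast
  define y where "y = psi n0"
  have yl: "y \<in> l2" using psi(1)[OF n0] lF unfolding y_def by blast
  have up: "l2norm (\<lambda>i. s n0 i - s n1 i) \<le> eps / 4"
  proof -
    have "l2norm (\<lambda>i. s n0 i - s n1 i) \<le> l2norm (\<lambda>i. s n0 i - y i) + l2norm (\<lambda>i. y i - s n1 i)"
      by (rule l2norm_diff_tri[OF sl yl sl])
    also have "l2norm (\<lambda>i. y i - s n1 i) = l2norm (\<lambda>i. s n1 i - y i)" by (rule l2norm_sym)
    finally show ?thesis using psi(2)[OF n0] psi(2)[OF n1(1)] n1(2) unfolding y_def by simp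
  qed
  have "I n1 \<noteq> I n0" using n1(3) blk_I by metis
  then have eqs: "(\<lambda>i. s n0 i - s n1 i) (I n0, l) = (Mf (I n0) (J n0) *v zf n0) $ l" for l
    unfolding s_def by (simp add: atv_eq)
  have "norm (Mf (I n0) (J n0) *v zf n0) \<le> l2norm (\<lambda>i. s n0 i - s n1 i)"
    by (rule atv_lower[where m="I n0", OF l2_diff(1)[OF sl sl] eqs])
  then show False using zf(2)[OF n0] up eps by simp
qed

lemma limsup_zero_iff:
  fixes f :: "nat \<Rightarrow> real"
  assumes nn: "\<And>n. f n \<ge> 0"
  shows "limsup (\<lambda>n. ereal (f n)) = 0 \<longleftrightarrow> f \<longlonglongrightarrow> 0"
proof
  assume "f \<longlonglongrightarrow> 0"
  then have "(\<lambda>n. ereal (f n)) \<longlonglongrightarrow> ereal 0" by simp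
  then have "limsup (\<lambda>n. ereal (f n)) = ereal 0" by (rule lim_imp_Limsup[OF trivial_limit_sequentially])
  then show "limsup (\<lambda>n. ereal (f n)) = 0" by (simp add: zero_ereal_def)
next
  assume ls: "limsup (\<lambda>n. ereal (f n)) = 0"
  have "0 \<le> liminf (\<lambda>n. ereal (f n))" by (rule Liminf_bounded) (simp add: nn)
  moreover have "liminf (\<lambda>n. ereal (f n)) \<le> limsup (\<lambda>n. ereal (f n))"
    by (rule Liminf_le_Limsup[OF trivial_limit_sequentially])
  ultimately have li: "liminf (\<lambda>n. ereal (f n)) = 0" using ls by simp
  have "(\<lambda>n. ereal (f n)) \<longlonglongrightarrow> 0" by (rule Liminf_eq_Limsup[OF trivial_limit_sequentially li ls])
  then show "f \<longlonglongrightarrow> 0" by (simp add: zero_ereal_def)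
qed

theorem lemma4p3:
  fixes u v :: "nat \<Rightarrow> complex^'m^'m"
  assumes "\<And>i. unitary_mat (u i)" and "\<And>i. unitary_mat (v i)"
  shows "((\<lambda>i. mnorm (u i - v i)) \<longlonglongrightarrow> 0 \<longrightarrow>
           (\<forall>T. bounded_op T \<longrightarrow> compact_op (\<lambda>y p. Phi u T y p - Phi v T y p)))
       \<and> (\<forall>E\<in>Part_N.
           (\<forall>a\<in>D_alg E. compact_op (\<lambda>y p. Phi u a y p - Phi v a y p))
           \<longleftrightarrow> limsup (\<lambda>n. ereal (Delta (E n) u v)) = 0)"
proof (intro conjI impI allI ballI)
  define M where "M = real CARD('m) * real CARD('m)"
  have Mu: "ent (u i) \<le> M" for i unfolding M_def by (rule unitary_ent[OF assms(1)])
  have Mv: "ent (v i) \<le> M" for i unfolding M_def by (rule unitary_ent[OF assms(2)])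
  show "compact_op (\<lambda>y p. Phi u T y p - Phi v T y p)"
    if "(\<lambda>i. mnorm (u i - v i)) \<longlonglongrightarrow> 0" "bounded_op T" for T
    by (rule part1[OF Mu Mv that])
  fix E assume "E \<in> Part_N"
  then obtain a where a0: "a 0 = 0" and sm: "strict_mono a" and Ea: "\<And>n. E n = {a n..<a (Suc n)}"
    unfolding Part_N_def by blast
  have EE: "E = (\<lambda>n. {a n..<a (Suc n)})" using Ea by blast
  have nn: "Delta (E n) u v \<ge> 0" for n
  proof -
    have "a n \<in> E n" unfolding Ea using sm by (simp add: strict_mono_def)
    moreover have "finite (E n)" unfolding Ea by simp
    ultimately show ?thesis using Delta_nonneg by blast
  qed
  have iff: "limsup (\<lambda>n. ereal (Delta (E n) u v)) = 0 \<longleftrightarrow> (\<lambda>n. Delta {a n..<a (Suc n)} u v) \<longlonglongrightarrow> 0"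
    using limsup_zero_iff[of "\<lambda>n. Delta (E n) u v", OF nn] unfolding EE .
  show "(\<forall>T\<in>D_alg E. compact_op (\<lambda>y p. Phi u T y p - Phi v T y p)) \<longleftrightarrow> limsup (\<lambda>n. ereal (Delta (E n) u v)) = 0"
  proof
    assume "\<forall>T\<in>D_alg E. compact_op (\<lambda>y p. Phi u T y p - Phi v T y p)"
    then have "(\<lambda>n. Delta {a n..<a (Suc n)} u v) \<longlonglongrightarrow> 0" unfolding EE by (rule part2_onlyif[OF a0 sm])
    then show "limsup (\<lambda>n. ereal (Delta (E n) u v)) = 0" using iff by simp
  next
    assume "limsup (\<lambda>n. ereal (Delta (E n) u v)) = 0"
    then have lim: "(\<lambda>n. Delta {a n..<a (Suc n)} u v) \<longlonglongrightarrow> 0" using iff by simp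
    show "\<forall>T\<in>D_alg E. compact_op (\<lambda>y p. Phi u T y p - Phi v T y p)"
      unfolding EE using part2_if[OF assms(1,2) a0 sm lim] by blast
  qed
qed


end
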